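(* Let $A$ be a linear Nakayama algebra with the canonical ordering $1\to2\to\cdots\to n$ of its vertices. Then the following are equivalent: (i) $A$ is Auslander regular; (ii) the inverse Auslander-Reiten map $\sigma$ is a bijection; (iii) there exists a Bruhat decomposition $C_A=U_1PU_2$ of the Coxeter matrix with $U_1$ the identity matrix. In this case, the Coxeter permutation coincides with the Auslander-Reiten permutation.
   Context: A linear Nakayama algebra is $A=KQ/I$ with $K$ a field, $Q$ the quiver $1\to2\to\cdots\to n$ and $I$ an admissible ideal; it has finite global dimension. Modules are finitely generated right modules, $P(i)=e_iA$, $I(i)=D(Ae_i)$. For each vertex $x$ the last non-zero term of a minimal injective coresolution of $P(x)$ is an indecomposable injective $I(y)$, and $\sigma(x)=y$ defines the inverse Auslander-Reiten map. $A$ is Auslander regular if it has finite global dimension and a minimal injective coresolution $0\to A_A\to I^0\to\cdots$ satisfies $\operatorname{pdim}I^i\le i$ for all $i$; in that case $\Omega^{\operatorname{pdim}I(i)}(I(i))\cong P(j)$ is indecomposable projective and the Auslander-Reiten permutation is $\hat\psi(i)=j$. Cartan matrix $\omega_A=(\dim_Ke_jAe_i)_{i,j}$, Coxeter matrix $C_A=-\omega_A^T\omega_A^{-1}$. A Bruhat decomposition $M=U_1PU_2$ of an invertible matrix has $U_1,U_2$ upper triangular and $P$ a permutation matrix (unique); the Coxeter permutation is $p_A(i)=j$ if the non-zero entry of column $i$ of $P$ in a Bruhat decomposition of $C_A$ lies in row $j$. *)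

theory Defs
  imports "Jordan_Normal_Form.Gauss_Jordan_Elimination"
begin

text \<open>A linear Nakayama algebra A = KQ/I, Q = 1 -> 2 -> ... -> n, I admissible, is determined
(up to isomorphism, independently of the field K) by its Kupisch series
c i = dim P(i) (right modules, P(i) = e_i A has composition factors S(i),...,S(i + c i - 1)).\<close>

definition kupisch :: "nat \<Rightarrow> (nat \<Rightarrow> nat) \<Rightarrow> bool" where
  "kupisch n c \<longleftrightarrow> 1 \<le> n \<and> c n = 1 \<and>
     (\<forall>i. 1 \<le> i \<and> i < n \<longrightarrow> 2 \<le> c i \<and> c i \<le> c (i+1) + 1)"

text \<open>Every indecomposable module is uniserial; a module (i,l) denotes the uniserial module
with top S(i) and length l, i.e. composition factors S(i),...,S(i+l-1).  Length 0 encodes the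
zero module.\<close>

type_synonym umod = "nat \<times> nat"

definition is_zero :: "umod \<Rightarrow> bool" where
  "is_zero M \<longleftrightarrow> snd M = 0"

definition socle :: "umod \<Rightarrow> nat" where
  "socle M = fst M + snd M - 1"

definition proj :: "(nat \<Rightarrow> nat) \<Rightarrow> nat \<Rightarrow> umod" where
  "proj c i = (i, c i)"

text \<open>Top of the indecomposable injective I(s) = D(A e_s): the largest uniserial module with
socle S(s).\<close>
definition inj_top :: "(nat \<Rightarrow> nat) \<Rightarrow> nat \<Rightarrow> nat" where
  "inj_top c s = (LEAST t. 1 \<le> t \<and> s < t + c t)"

definition inj :: "(nat \<Rightarrow> nat) \<Rightarrow> nat \<Rightarrow> umod" where
  "inj c s = (inj_top c s, s + 1 - inj_top c s)"

text \<open>Syzygy: kernel of the projective cover P(i) -> (i,l).\<close>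
definition syz :: "(nat \<Rightarrow> nat) \<Rightarrow> umod \<Rightarrow> umod" where
  "syz c M = (if snd M = 0 then M
              else (fst M + snd M, c (fst M) - snd M))"

text \<open>Cosyzygy: cokernel of the injective envelope (i,l) -> I(socle (i,l)).\<close>
definition cosyz :: "(nat \<Rightarrow> nat) \<Rightarrow> umod \<Rightarrow> umod" where
  "cosyz c M = (if snd M = 0 then M
                else (inj_top c (socle M), fst M - inj_top c (socle M)))"

definition pdim :: "(nat \<Rightarrow> nat) \<Rightarrow> umod \<Rightarrow> nat" where
  "pdim c M = (LEAST k. is_zero ((syz c ^^ (k+1)) M))"

text \<open>The k-th term I^k of the minimal injective coresolution of A_A = P(1) + ... + P(n),
as a multiset of vertices y (standing for the summands I(y)).  It is the direct sum of the
k-th terms of the minimal injective coresolutions of the P(x), and the k-th term for P(x) is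
the injective envelope I(socle (cosyz^k P(x))) of the k-th cosyzygy, when that is non-zero.\<close>
definition inj_coresol_term :: "nat \<Rightarrow> (nat \<Rightarrow> nat) \<Rightarrow> nat \<Rightarrow> nat multiset" where
  "inj_coresol_term n c k =
     image_mset (\<lambda>x. socle ((cosyz c ^^ k) (proj c x)))
       (filter_mset (\<lambda>x. \<not> is_zero ((cosyz c ^^ k) (proj c x))) (mset_set {1..n}))"

text \<open>Auslander regular (finite global dimension is automatic for linear Nakayama
algebras): pdim I^k \<le> k for all k; pdim of a direct sum is the maximum over the summands.\<close>
definition auslander_regular :: "nat \<Rightarrow> (nat \<Rightarrow> nat) \<Rightarrow> bool" where
  "auslander_regular n c \<longleftrightarrow>
     (\<forall>k. \<forall>y \<in># inj_coresol_term n c k. pdim c (inj c y) \<le> k)"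

text \<open>Inverse Auslander-Reiten map: the last non-zero term of the minimal injective coresolution
of P(x) is I(sigma x).\<close>
definition last_coresol_index :: "(nat \<Rightarrow> nat) \<Rightarrow> nat \<Rightarrow> nat" where
  "last_coresol_index c x = (LEAST k. is_zero ((cosyz c ^^ (k+1)) (proj c x)))"

definition inv_AR_map :: "(nat \<Rightarrow> nat) \<Rightarrow> nat \<Rightarrow> nat" where
  "inv_AR_map c x = socle ((cosyz c ^^ last_coresol_index c x) (proj c x))"

text \<open>Auslander-Reiten permutation: Omega^(pdim I(i)) (I(i)) = P(j), psi i = j (the top of it).\<close>
definition AR_perm :: "(nat \<Rightarrow> nat) \<Rightarrow> nat \<Rightarrow> nat" where
  "AR_perm c i = fst ((syz c ^^ pdim c (inj c i)) (inj c i))"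

text \<open>Matrix indices 0..n-1 correspond to vertices 1..n.  Entry (i,j) is
dim e_j A e_i = [P(j) : S(i)], which is 1 iff j \<le> i \<le> j + c j - 1.\<close>
definition cartan :: "nat \<Rightarrow> (nat \<Rightarrow> nat) \<Rightarrow> real mat" where
  "cartan n c = mat n n (\<lambda>(i,j). if j \<le> i \<and> i < j + c (j+1) then 1 else 0)"

definition coxeter :: "nat \<Rightarrow> (nat \<Rightarrow> nat) \<Rightarrow> real mat" where
  "coxeter n c = - ((cartan n c)\<^sup>T * the (mat_inverse (cartan n c)))"

definition perm_matrix :: "nat \<Rightarrow> (nat \<Rightarrow> nat) \<Rightarrow> real mat" where
  "perm_matrix n p = mat n n (\<lambda>(i,j). if i = p j then 1 else 0)"

text \<open>Bruhat decomposition M = U1 P U2: U1, U2 invertible upper triangular, P the permutation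
matrix of a permutation p of {0..<n} (the non-zero entry of column j is in row p j).\<close>
definition bruhat_decomp :: "nat \<Rightarrow> real mat \<Rightarrow> real mat \<Rightarrow> (nat \<Rightarrow> nat) \<Rightarrow> real mat \<Rightarrow> bool" where
  "bruhat_decomp n M U1 p U2 \<longleftrightarrow>
     U1 \<in> carrier_mat n n \<and> U2 \<in> carrier_mat n n \<and>
     upper_triangular U1 \<and> upper_triangular U2 \<and>
     invertible_mat U1 \<and> invertible_mat U2 \<and>
     p permutes {0..<n} \<and>
     M = U1 * perm_matrix n p * U2"

end

theory Submission
  imports Defs "Jordan_Normal_Form.Determinant"
begin

definition mod_of :: "nat \<Rightarrow> nat \<Rightarrow> umod" where
  "mod_of p q = (p+1, q - p)"

locale kup =
  fixes n :: nat and c :: "nat \<Rightarrow> nat"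
  assumes K: "kupisch n c"
begin

definition Ef :: "nat \<Rightarrow> nat" where
  "Ef a = (if a < n then a + c (a+1) else n)"

definition Gf :: "nat \<Rightarrow> nat" where
  "Gf q = inj_top c q - 1"

fun ych :: "nat \<Rightarrow> nat \<Rightarrow> nat" where
  "ych a 0 = Ef a"
| "ych a (Suc 0) = a"
| "ych a (Suc (Suc k)) = Gf (ych a k)"

fun xch :: "nat \<Rightarrow> nat \<Rightarrow> nat" where
  "xch s 0 = Gf s"
| "xch s (Suc 0) = s"
| "xch s (Suc (Suc k)) = Ef (xch s k)"

lemma n_pos: "1 \<le> n" using K unfolding kupisch_def by auto

lemma c_step: "1 \<le> i \<Longrightarrow> i < n \<Longrightarrow> 2 \<le> c i \<and> c i \<le> c (i+1) + 1"
  using K unfolding kupisch_def by auto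

lemma c_n: "c n = 1" using K unfolding kupisch_def by auto

lemma c_pos: "1 \<le> i \<Longrightarrow> i \<le> n \<Longrightarrow> 1 \<le> c i"
  using c_step c_n by (cases "i = n") force+

lemma c_bound: "1 \<le> i \<Longrightarrow> i \<le> n \<Longrightarrow> c i + i \<le> n + 1"
proof (induction "n - i" arbitrary: i)
  case 0 then show ?case using c_n by auto
next
  case (Suc d)
  then have "i < n" by auto
  have "c (i+1) + (i+1) \<le> n + 1" using Suc(1)[of "i+1"] Suc(2) \<open>i<n\<close> by auto
  with c_step[OF Suc(3) \<open>i<n\<close>] show ?case by auto
qed

lemma h_mono: "1 \<le> t \<Longrightarrow> t \<le> u \<Longrightarrow> u \<le> n \<Longrightarrow> t + c t \<le> u + c u"
proof (induction "u - t" arbitrary: u)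
  case 0 then show ?case by auto
next
  case (Suc d)
  then have u1: "t \<le> u - 1" "u - 1 < n" "1 \<le> u - 1" by auto
  have "t + c t \<le> (u-1) + c (u-1)" using Suc(1)[of "u-1"] Suc by auto
  moreover have "c (u-1) \<le> c u + 1" using c_step[of "u-1"] u1 by auto
  ultimately show ?case using u1 by auto
qed

lemma Ef_le_n: "Ef a \<le> n"
  unfolding Ef_def using c_bound[of "a+1"] by auto

lemma Ef_gt: "a < n \<Longrightarrow> a < Ef a"
  unfolding Ef_def using c_pos[of "a+1"] by auto

lemma Ef_mono: "a \<le> b \<Longrightarrow> Ef a \<le> Ef b"
proof -
  assume ab: "a \<le> b"
  show ?thesis
  proof (cases "b < n")
    case True
    then have "a + 1 + c (a+1) \<le> b + 1 + c (b+1)" using h_mono[of "a+1" "b+1"] ab by auto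
    then show ?thesis using True ab unfolding Ef_def by auto
  next
    case False
    then show ?thesis using Ef_le_n[of a] unfolding Ef_def by auto
  qed
qed

lemma inj_top_prop: assumes "q \<le> n"
  shows "1 \<le> inj_top c q \<and> q < inj_top c q + c (inj_top c q) \<and> inj_top c q \<le> max 1 q"
proof -
  have w: "1 \<le> max 1 q \<and> q < max 1 q + c (max 1 q)"
    using c_pos[of "max 1 q"] assms n_pos by auto
  show ?thesis unfolding inj_top_def
    using LeastI[of "\<lambda>t. 1 \<le> t \<and> q < t + c t", OF w] Least_le[of "\<lambda>t. 1 \<le> t \<and> q < t + c t", OF w]
    by auto
qed

lemma Gf_lt: "1 \<le> q \<Longrightarrow> q \<le> n \<Longrightarrow> Gf q < q"
  using inj_top_prop[of q] unfolding Gf_def by auto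

lemma Gf_le_n1: "q \<le> n \<Longrightarrow> Gf q \<le> n - 1"
  using inj_top_prop[of q] n_pos unfolding Gf_def by auto

lemma Gf_le: "q \<le> n \<Longrightarrow> Gf q \<le> q"
  using inj_top_prop[of q] unfolding Gf_def by auto

lemma galois: assumes q: "q \<le> n" shows "Gf q \<le> a \<longleftrightarrow> q \<le> Ef a"
proof (cases "a < n")
  case False
  then show ?thesis using Gf_le_n1[OF q] q unfolding Ef_def by auto
next
  case True
  have ip: "1 \<le> inj_top c q" "q < inj_top c q + c (inj_top c q)" using inj_top_prop[OF q] by auto
  show ?thesis
  proof
    assume "Gf q \<le> a"
    then have "inj_top c q \<le> a + 1" using ip unfolding Gf_def by auto
    then have "inj_top c q + c (inj_top c q) \<le> (a+1) + c (a+1)" using h_mono[of "inj_top c q" "a+1"] ip True by auto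
    then show "q \<le> Ef a" using ip True unfolding Ef_def by auto
  next
    assume "q \<le> Ef a"
    then have "1 \<le> a+1 \<and> q < (a+1) + c (a+1)" using True unfolding Ef_def by auto
    then have "inj_top c q \<le> a + 1" unfolding inj_top_def by (rule Least_le)
    then show "Gf q \<le> a" unfolding Gf_def by auto
  qed
qed

lemma Gf_mono: "q \<le> q' \<Longrightarrow> q' \<le> n \<Longrightarrow> Gf q \<le> Gf q'"
  using galois[of q "Gf q'"] galois[of q' "Gf q'"] by auto

lemma EG: "q \<le> n \<Longrightarrow> q \<le> Ef (Gf q)" using galois by auto
lemma GE: "Gf (Ef a) \<le> a" using galois[of "Ef a" a] Ef_le_n by auto

end

lemma is_zero_mod: "Defs.is_zero (mod_of p q) \<longleftrightarrow> q \<le> p"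
  unfolding Defs.is_zero_def mod_of_def by auto

lemma socle_mod: "p < q \<Longrightarrow> socle (mod_of p q) = q"
  unfolding socle_def mod_of_def by auto

lemma cosyz_fix: "Defs.is_zero M \<Longrightarrow> cosyz c M = M"
  unfolding cosyz_def Defs.is_zero_def by auto

lemma syz_fix: "Defs.is_zero M \<Longrightarrow> syz c M = M"
  unfolding syz_def Defs.is_zero_def by auto

lemma funpow_fix: "f M = M \<Longrightarrow> (f ^^ m) M = M"
  by (induction m) auto

context kup begin

lemma proj_eq: "a < n \<Longrightarrow> proj c (a+1) = mod_of a (Ef a)"
  unfolding proj_def mod_of_def Ef_def by auto

lemma inj_eq: "s \<le> n \<Longrightarrow> inj c s = mod_of (Gf s) s"
  using inj_top_prop[of s] unfolding inj_def mod_of_def Gf_def by auto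

lemma cosyz_mod: "p < q \<Longrightarrow> q \<le> n \<Longrightarrow> Gf q \<le> p \<Longrightarrow> cosyz c (mod_of p q) = mod_of (Gf q) p"
  using inj_top_prop[of q] unfolding cosyz_def mod_of_def Gf_def socle_def by auto

lemma syz_mod: "p < q \<Longrightarrow> q \<le> Ef p \<Longrightarrow> p < n \<Longrightarrow> syz c (mod_of p q) = mod_of q (Ef p)"
  unfolding syz_def mod_of_def Ef_def by auto

lemma ych_le_n: "a < n \<Longrightarrow> ych a k \<le> n"
  by (induction a k rule: ych.induct) (auto simp: Ef_le_n intro: order.trans[OF Gf_le_n1])

lemma xch_le_n: "s \<le> n \<Longrightarrow> xch s k \<le> n"
  by (induction s k rule: xch.induct) (auto simp: Ef_le_n intro: order.trans[OF Gf_le_n1])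

lemma ych_dec_aux: "a < n \<Longrightarrow> ych a (k+1) \<le> ych a k \<and> ych a k \<le> Ef (ych a (k+1))"
proof (induction k)
  case 0 then show ?case using Ef_gt[of a] by auto
next
  case (Suc k)
  then have h: "ych a (k+1) \<le> ych a k" "ych a k \<le> Ef (ych a (k+1))" by auto
  have b: "ych a k \<le> n" "ych a (k+1) \<le> n" using ych_le_n Suc by auto
  have 1: "ych a (Suc k + 1) \<le> ych a (Suc k)"
    using galois[OF b(1), of "ych a (k+1)"] h by simp
  have 2: "ych a (Suc k) \<le> Ef (ych a (Suc k + 1))"
    using EG[OF b(1)] h(1) by simp
  show ?case using 1 2 by simp
qed

lemma ych_dec: "a < n \<Longrightarrow> ych a (k+1) \<le> ych a k"
  using ych_dec_aux by auto

lemma ych_dec_le: "a < n \<Longrightarrow> j \<le> k \<Longrightarrow> ych a k \<le> ych a j"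
proof (induction k)
  case 0 then show ?case by auto
next
  case (Suc k) then show ?case using ych_dec[of a k] by (cases "j = Suc k") auto
qed

lemma xch_inc_aux: "s \<le> n \<Longrightarrow> xch s k \<le> xch s (k+1) \<and> Gf (xch s (k+1)) \<le> xch s k"
proof (induction k)
  case 0 then show ?case using Gf_le[of s] by auto
next
  case (Suc k)
  then have h: "xch s k \<le> xch s (k+1)" "Gf (xch s (k+1)) \<le> xch s k" by auto
  have b: "xch s k \<le> n" "xch s (k+1) \<le> n" using xch_le_n Suc by auto
  have 1: "xch s (Suc k) \<le> xch s (Suc k + 1)"
    using galois[OF b(2), of "xch s k"] h by simp
  have 2: "Gf (xch s (Suc k + 1)) \<le> xch s (Suc k)"
    using GE[of "xch s k"] h(1) by simp
  show ?case using 1 2 by simp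
qed

lemma xch_inc: "s \<le> n \<Longrightarrow> xch s k \<le> xch s (k+1)"
  using xch_inc_aux by auto

lemma xch_inc_le: "s \<le> n \<Longrightarrow> j \<le> k \<Longrightarrow> xch s j \<le> xch s k"
proof (induction k)
  case 0 then show ?case by auto
next
  case (Suc k) then show ?case using xch_inc[of s k] by (cases "j = Suc k") auto
qed

lemma cosyz_iter: assumes a: "a < n"
  shows "(\<forall>j < k. ych a (j+1) < ych a j) \<Longrightarrow>
     (cosyz c ^^ k) (proj c (a+1)) = mod_of (ych a (k+1)) (ych a k)"
proof (induction k)
  case 0 then show ?case using proj_eq[OF a] by simp
next
  case (Suc k)
  then have st: "ych a (k+1) < ych a k" by auto
  have "(cosyz c ^^ Suc k) (proj c (a+1)) = cosyz c (mod_of (ych a (k+1)) (ych a k))"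
    using Suc by auto
  also have "\<dots> = mod_of (Gf (ych a k)) (ych a (k+1))"
    using cosyz_mod[OF st ych_le_n[OF a]] ych_dec_aux[OF a, of "k+1"] by simp
  finally show ?case by simp
qed

lemma cosyz_zero_iff: assumes a: "a < n"
  shows "Defs.is_zero ((cosyz c ^^ k) (proj c (a+1))) \<longleftrightarrow> (\<exists>j \<le> k. ych a (j+1) = ych a j)"
proof (induction k)
  case 0 then show ?case using proj_eq[OF a] Ef_gt[OF a] is_zero_mod by auto
next
  case (Suc k)
  show ?case
  proof (cases "\<exists>j \<le> k. ych a (j+1) = ych a j")
    case True
    then have "Defs.is_zero ((cosyz c ^^ k) (proj c (a+1)))" using Suc by auto
    then have "Defs.is_zero ((cosyz c ^^ Suc k) (proj c (a+1)))" using cosyz_fix by auto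
    then show ?thesis using True le_SucI by blast
  next
    case False
    then have st: "\<forall>j < Suc k. ych a (j+1) < ych a j" using ych_dec[OF a]
      by (metis le_less less_Suc_eq_le)
    have "(cosyz c ^^ Suc k) (proj c (a+1)) = mod_of (ych a (Suc k+1)) (ych a (Suc k))"
      using cosyz_iter[OF a st] .
    then have "Defs.is_zero ((cosyz c ^^ Suc k) (proj c (a+1))) \<longleftrightarrow> ych a (Suc k + 1) = ych a (Suc k)"
      using is_zero_mod ych_dec[OF a, of "Suc k"] by auto
    then show ?thesis using False by (auto simp: le_Suc_eq)
  qed
qed

lemma strict_bound: "(\<forall>j < m. (f::nat\<Rightarrow>nat) (j+1) < f j) \<Longrightarrow> f m + m \<le> f 0"
proof (induction m)
  case 0 then show ?case by simp
next
  case (Suc m)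
  then have "f m + m \<le> f 0" "f (m+1) < f m" by auto
  then show ?case by simp
qed

definition Lc :: "nat \<Rightarrow> nat" where "Lc a = last_coresol_index c (a+1)"

lemma Lc_props: assumes a: "a < n"
  shows "(\<forall>j \<le> Lc a. ych a (j+1) < ych a j) \<and> ych a (Lc a + 2) = ych a (Lc a + 1)"
proof -
  let ?Q = "\<lambda>k. Defs.is_zero ((cosyz c ^^ (k+1)) (proj c (a+1)))"
  have ex: "?Q n"
  proof (rule ccontr)
    assume "\<not> ?Q n"
    then have "\<forall>j < n+2. ych a (j+1) < ych a j" using cosyz_zero_iff[OF a, of "n+1"] ych_dec[OF a]
      by (metis Suc_eq_plus1 add_2_eq_Suc' le_less less_Suc_eq_le)
    then have "ych a (n+2) + (n+2) \<le> ych a 0" using strict_bound[of "n+2" "ych a"] by auto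
    then show False using ych_le_n[OF a, of 0] by auto
  qed
  have L: "Lc a = (LEAST k. ?Q k)" unfolding Lc_def last_coresol_index_def by simp
  have QL: "?Q (Lc a)" using LeastI[of ?Q, OF ex] L by simp
  have nQ: "\<And>k. k < Lc a \<Longrightarrow> \<not> ?Q k" using not_less_Least L by simp
  have st: "\<forall>j \<le> Lc a. ych a (j+1) < ych a j"
  proof (intro allI impI)
    fix j assume j: "j \<le> Lc a"
    show "ych a (j+1) < ych a j"
    proof (rule ccontr)
      assume "\<not> ?thesis"
      then have eq: "ych a (j+1) = ych a j" using ych_dec[OF a, of j] by auto
      show False
      proof (cases j)
        case 0 then show False using eq Ef_gt[OF a] by auto
      next
        case (Suc j')
        then have "?Q j'" using cosyz_zero_iff[OF a, of "j'+1"] eq by auto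
        then show False using nQ[of j'] Suc j by auto
      qed
    qed
  qed
  have "\<exists>j \<le> Lc a + 1. ych a (j+1) = ych a j" using QL cosyz_zero_iff[OF a, of "Lc a + 1"] by blast
  then obtain j where j: "j \<le> Lc a + 1" "ych a (j+1) = ych a j" by blast
  then have "j = Lc a + 1" using st by (metis le_Suc_eq less_irrefl Suc_eq_plus1)
  then show ?thesis using st j by simp
qed

lemma sigma_eq: assumes a: "a < n" shows "inv_AR_map c (a+1) = ych a (Lc a)"
proof -
  have "(\<forall>j < Lc a. ych a (j+1) < ych a j)" using Lc_props[OF a] by auto
  then have "(cosyz c ^^ Lc a) (proj c (a+1)) = mod_of (ych a (Lc a + 1)) (ych a (Lc a))"
    using cosyz_iter[OF a] by blast
  then show ?thesis unfolding inv_AR_map_def Lc_def[symmetric]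
    using socle_mod Lc_props[OF a] by auto
qed

lemma sigma_range: assumes a: "a < n" shows "1 \<le> ych a (Lc a) \<and> ych a (Lc a) \<le> n"
  using Lc_props[OF a] ych_le_n[OF a] by (metis le_refl less_one not_less_zero le_less_trans linorder_not_le)

lemma nonzero_iff_le_Lc: assumes a: "a < n"
  shows "\<not> Defs.is_zero ((cosyz c ^^ k) (proj c (a+1))) \<longleftrightarrow> k \<le> Lc a"
proof
  assume "\<not> Defs.is_zero ((cosyz c ^^ k) (proj c (a+1)))"
  then have "\<forall>j \<le> k. ych a (j+1) \<noteq> ych a j" using cosyz_zero_iff[OF a] by auto
  then show "k \<le> Lc a" using Lc_props[OF a] by (metis add_2_eq_Suc' Suc_eq_plus1 not_less_eq_eq)
next
  assume "k \<le> Lc a"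
  then show "\<not> Defs.is_zero ((cosyz c ^^ k) (proj c (a+1)))" using cosyz_zero_iff[OF a] Lc_props[OF a]
    by (metis le_trans less_irrefl)
qed

lemma socle_iter: assumes a: "a < n" and k: "k \<le> Lc a"
  shows "socle ((cosyz c ^^ k) (proj c (a+1))) = ych a k"
proof -
  have "(\<forall>j < k. ych a (j+1) < ych a j)" using Lc_props[OF a] k by auto
  then show ?thesis using cosyz_iter[OF a] socle_mod Lc_props[OF a] k by auto
qed

end

context kup begin

lemma syz_iter: assumes s: "s \<le> n"
  shows "(\<forall>i < j. xch s i < xch s (i+1)) \<Longrightarrow>
     (syz c ^^ j) (inj c s) = mod_of (xch s j) (xch s (j+1))"
proof (induction j)
  case 0 then show ?case using inj_eq[OF s] by simp
next
  case (Suc j)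
  then have st: "xch s j < xch s (j+1)" by auto
  have "(syz c ^^ Suc j) (inj c s) = syz c (mod_of (xch s j) (xch s (j+1)))"
    using Suc by auto
  also have "\<dots> = mod_of (xch s (j+1)) (Ef (xch s j))"
  proof (rule syz_mod[OF st])
    show "xch s (j + 1) \<le> Ef (xch s j)" using xch_inc[OF s, of "j+1"] by simp
    show "xch s j < n" using st xch_le_n[OF s, of "j+1"] by simp
  qed
  finally show ?case by simp
qed

lemma syz_zero_iff: assumes s: "1 \<le> s" "s \<le> n"
  shows "Defs.is_zero ((syz c ^^ k) (inj c s)) \<longleftrightarrow> (\<exists>j \<le> k. xch s (j+1) = xch s j)"
proof (induction k)
  case 0 then show ?case using inj_eq[OF s(2)] Gf_lt[OF s] is_zero_mod by auto
next
  case (Suc k)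
  show ?case
  proof (cases "\<exists>j \<le> k. xch s (j+1) = xch s j")
    case True
    then have "Defs.is_zero ((syz c ^^ k) (inj c s))" using Suc by auto
    then have "Defs.is_zero ((syz c ^^ Suc k) (inj c s))" using syz_fix by auto
    then show ?thesis using True le_SucI by blast
  next
    case False
    then have st: "\<forall>j < Suc k. xch s j < xch s (j+1)" using xch_inc[OF s(2)]
      by (metis le_less less_Suc_eq_le)
    have "(syz c ^^ Suc k) (inj c s) = mod_of (xch s (Suc k)) (xch s (Suc k+1))"
      using syz_iter[OF s(2) st] .
    then have "Defs.is_zero ((syz c ^^ Suc k) (inj c s)) \<longleftrightarrow> xch s (Suc k + 1) = xch s (Suc k)"
      using is_zero_mod xch_inc[OF s(2), of "Suc k"] by auto
    then show ?thesis using False by (auto simp: le_Suc_eq)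
  qed
qed

definition pd :: "nat \<Rightarrow> nat" where "pd s = pdim c (inj c s)"

lemma pd_props: assumes s: "1 \<le> s" "s \<le> n"
  shows "(\<forall>j \<le> pd s. xch s j < xch s (j+1)) \<and> xch s (pd s + 2) = xch s (pd s + 1)
     \<and> (\<forall>k. pd s \<le> k \<longleftrightarrow> (\<exists>j \<le> k+1. xch s (j+1) = xch s j))"
proof -
  let ?Q = "\<lambda>k. Defs.is_zero ((syz c ^^ (k+1)) (inj c s))"
  have ex: "?Q n"
  proof (rule ccontr)
    assume "\<not> ?Q n"
    then have "\<forall>j < n+2. xch s j < xch s (j+1)" using syz_zero_iff[OF s, of "n+1"] xch_inc[OF s(2)]
      by (metis Suc_eq_plus1 add_2_eq_Suc' le_less less_Suc_eq_le)
    then have "\<forall>j < n+2. (\<lambda>j. n - xch s j) (j+1) < (\<lambda>j. n - xch s j) j"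
      using xch_le_n[OF s(2)] by (metis diff_less_mono2 le_imp_less_Suc less_le_trans)
    then have "(n - xch s (n+2)) + (n+2) \<le> n - xch s 0" using strict_bound[of "n+2" "\<lambda>j. n - xch s j"] by auto
    then show False by auto
  qed
  have L: "pd s = (LEAST k. ?Q k)" unfolding pd_def pdim_def by simp
  have QL: "?Q (pd s)" using LeastI[of ?Q, OF ex] L by simp
  have nQ: "\<And>k. k < pd s \<Longrightarrow> \<not> ?Q k" using not_less_Least L by simp
  have st: "\<forall>j \<le> pd s. xch s j < xch s (j+1)"
  proof (intro allI impI)
    fix j assume j: "j \<le> pd s"
    show "xch s j < xch s (j+1)"
    proof (rule ccontr)
      assume "\<not> ?thesis"
      then have eq: "xch s (j+1) = xch s j" using xch_inc[OF s(2), of j] by auto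
      show False
      proof (cases j)
        case 0 then show False using eq Gf_lt[OF s] by auto
      next
        case (Suc j')
        then have "?Q j'" using syz_zero_iff[OF s, of "j'+1"] eq by auto
        then show False using nQ[of j'] Suc j by auto
      qed
    qed
  qed
  have "\<exists>j \<le> pd s + 1. xch s (j+1) = xch s j" using QL syz_zero_iff[OF s, of "pd s + 1"] by blast
  then obtain j where j: "j \<le> pd s + 1" "xch s (j+1) = xch s j" by blast
  then have "j = pd s + 1" using st by (metis le_Suc_eq less_irrefl Suc_eq_plus1)
  then have e: "xch s (pd s + 2) = xch s (pd s + 1)" using j by simp
  have iff: "\<forall>k. pd s \<le> k \<longleftrightarrow> (\<exists>j \<le> k+1. xch s (j+1) = xch s j)"
  proof (intro allI iffI)
    fix k assume "pd s \<le> k"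
    then show "\<exists>j \<le> k+1. xch s (j+1) = xch s j" using e by (intro exI[of _ "pd s + 1"]) auto
  next
    fix k assume "\<exists>j \<le> k+1. xch s (j+1) = xch s j"
    then have "?Q k" using syz_zero_iff[OF s, of "k+1"] by blast
    then show "pd s \<le> k" using nQ not_less by blast
  qed
  show ?thesis using st e iff by blast
qed

lemma pd_le_iff: "1 \<le> s \<Longrightarrow> s \<le> n \<Longrightarrow> pd s \<le> k \<longleftrightarrow> (\<exists>j \<le> k+1. xch s (j+1) = xch s j)"
  using pd_props by blast

lemma psi_eq: assumes s: "1 \<le> s" "s \<le> n" shows "AR_perm c s = xch s (pd s) + 1"
proof -
  have "(\<forall>j < pd s. xch s j < xch s (j+1))" using pd_props[OF s] by auto
  then have "(syz c ^^ pd s) (inj c s) = mod_of (xch s (pd s)) (xch s (pd s + 1))"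
    using syz_iter[OF s(2)] by blast
  then show ?thesis unfolding AR_perm_def pd_def[symmetric] mod_of_def by simp
qed

lemma psi_range: assumes s: "1 \<le> s" "s \<le> n" shows "xch s (pd s) < n"
  using pd_props[OF s] xch_le_n[OF s(2), of "pd s + 1"] by (metis le_refl less_le_trans)

lemma reg_iff: "auslander_regular n c \<longleftrightarrow> (\<forall>a < n. \<forall>k \<le> Lc a. pd (ych a k) \<le> k)"
proof -
  have "auslander_regular n c \<longleftrightarrow> (\<forall>k. \<forall>x \<in> {1..n}. \<not> Defs.is_zero ((cosyz c ^^ k) (proj c x)) \<longrightarrow>
          pdim c (inj c (socle ((cosyz c ^^ k) (proj c x)))) \<le> k)"
    unfolding auslander_regular_def inj_coresol_term_def by auto
  also have "\<dots> \<longleftrightarrow> (\<forall>k. \<forall>a < n. \<not> Defs.is_zero ((cosyz c ^^ k) (proj c (a+1))) \<longrightarrow>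
          pdim c (inj c (socle ((cosyz c ^^ k) (proj c (a+1))))) \<le> k)"
  proof -
    have "\<And>P. (\<forall>x \<in> {1..n}. P x) \<longleftrightarrow> (\<forall>a < n. P (a+1))"
    proof
      fix P assume "\<forall>x \<in> {1..n}. P x" then show "\<forall>a < n. P (a+1)" by auto
    next
      fix P assume h: "\<forall>a < n. P (a+1)"
      show "\<forall>x \<in> {1..n}. P x"
      proof
        fix x assume "x \<in> {1..n}"
        then have "x - 1 < n" "x = (x - 1) + 1" by auto
        then show "P x" using h by metis
      qed
    qed
    then show ?thesis by simp
  qed
  also have "\<dots> \<longleftrightarrow> (\<forall>a < n. \<forall>k \<le> Lc a. pd (ych a k) \<le> k)"
    using nonzero_iff_le_Lc socle_iter unfolding pd_def by auto
  finally show ?thesis .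
qed

end

lemma nat_parity_split: "(i::nat) = 2*(i div 2) \<or> i = 2*(i div 2) + 1" by presburger

lemma discrete_ivt: "P (0::nat) \<Longrightarrow> \<not> P M \<Longrightarrow> \<exists>m < M. P m \<and> \<not> P (Suc m)"
proof (induction M)
  case 0 then show ?case by auto
next
  case (Suc M)
  then show ?case by (cases "P M") (auto, meson less_SucI)
qed

context kup begin

lemma prop_EG_lower:
  fixes m :: nat
  assumes wE: "\<And>t. w (t+2) = Ef (w t)" and yG: "\<And>t. y (t+2) = Gf (y t)" and yb: "\<And>t. y t \<le> n"
  shows "y i \<le> w j \<Longrightarrow> 2*m \<le> i \<Longrightarrow> y (i - 2*m) \<le> w (j + 2*m)"
proof (induction m)
  case 0 then show ?case by simp
next
  case (Suc m)
  then have h: "y (i - 2*m) \<le> w (j + 2*m)" by simp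
  have ii: "i - 2*m = (i - 2*Suc m) + 2" using Suc.prems(2) by simp
  have e: "y (i - 2*m) = Gf (y (i - 2*Suc m))" by (subst ii) (rule yG)
  have "y (i - 2*Suc m) \<le> Ef (y (i - 2*m))" unfolding e using EG[OF yb] .
  also have "\<dots> \<le> Ef (w (j + 2*m))" using Ef_mono h by simp
  also have "\<dots> = w (j + 2*Suc m)" using wE[of "j+2*m"] by simp
  finally show ?case .
qed

lemma prop_EG_upper:
  fixes m :: nat
  assumes wE: "\<And>t. w (t+2) = Ef (w t)" and yG: "\<And>t. y (t+2) = Gf (y t)" and yb: "\<And>t. y t \<le> n"
  shows "w j < y i \<Longrightarrow> 2*m \<le> i \<Longrightarrow> w (j + 2*m) < y (i - 2*m)"
proof (induction m)
  case 0 then show ?case by simp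
next
  case (Suc m)
  then have h: "w (j + 2*m) < y (i - 2*m)" by simp
  have ii: "i - 2*m = (i - 2*Suc m) + 2" using Suc.prems(2) by simp
  have e: "y (i - 2*m) = Gf (y (i - 2*Suc m))" by (subst ii) (rule yG)
  have "\<not> Gf (y (i - 2*Suc m)) \<le> w (j + 2*m)" using h e by simp
  then have "\<not> y (i - 2*Suc m) \<le> Ef (w (j + 2*m))" using galois[OF yb] by simp
  then show ?case using wE[of "j+2*m"] by simp
qed

lemma prop_EE:
  fixes m :: nat
  assumes wE: "\<And>t. w (t+2) = Ef (w t)" and xE: "\<And>t. x (t+2) = Ef (x t)"
  shows "w j \<le> x i \<Longrightarrow> w (j + 2*m) \<le> x (i + 2*m)"
proof (induction m)
  case 0 then show ?case by simp
next
  case (Suc m)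
  then show ?case using wE[of "j+2*m"] xE[of "i+2*m"] Ef_mono by simp
qed

lemma prop_GE_upper:
  fixes m :: nat
  assumes zG: "\<And>t. z (t+2) = Gf (z t)" and xE: "\<And>t. x (t+2) = Ef (x t)" and xb: "\<And>t. x t \<le> n"
  shows "z j \<le> x i \<Longrightarrow> 2*m \<le> i \<Longrightarrow> z (j + 2*m) \<le> x (i - 2*m)"
proof (induction m)
  case 0 then show ?case by simp
next
  case (Suc m)
  then have h: "z (j + 2*m) \<le> x (i - 2*m)" by simp
  have ii: "i - 2*m = (i - 2*Suc m) + 2" using Suc.prems(2) by simp
  have e: "x (i - 2*m) = Ef (x (i - 2*Suc m))" by (subst ii) (rule xE)
  have "z (j + 2*Suc m) = Gf (z (j + 2*m))" using zG[of "j+2*m"] by simp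
  also have "\<dots> \<le> Gf (x (i - 2*m))" using Gf_mono[OF h xb] .
  also have "\<dots> \<le> x (i - 2*Suc m)" using e GE by simp
  finally show ?case .
qed

lemma prop_GE_lower:
  fixes m :: nat
  assumes zG: "\<And>t. z (t+2) = Gf (z t)" and xE: "\<And>t. x (t+2) = Ef (x t)" and zb: "\<And>t. z t \<le> n"
  shows "x i < z j \<Longrightarrow> 2*m \<le> i \<Longrightarrow> x (i - 2*m) < z (j + 2*m)"
proof (induction m)
  case 0 then show ?case by simp
next
  case (Suc m)
  then have h: "x (i - 2*m) < z (j + 2*m)" by simp
  have ii: "i - 2*m = (i - 2*Suc m) + 2" using Suc.prems(2) by simp
  have e: "x (i - 2*m) = Ef (x (i - 2*Suc m))" by (subst ii) (rule xE)
  have "\<not> z (j + 2*m) \<le> Ef (x (i - 2*Suc m))" using h e by simp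
  then have "\<not> Gf (z (j + 2*m)) \<le> x (i - 2*Suc m)" using galois[OF zb] by simp
  then show ?case using zG[of "j+2*m"] by simp
qed

lemma prop_GG:
  fixes m :: nat
  assumes zG: "\<And>t. z (t+2) = Gf (z t)" and yG: "\<And>t. y (t+2) = Gf (y t)" and zb: "\<And>t. z t \<le> n"
  shows "y i \<le> z j \<Longrightarrow> y (i + 2*m) \<le> z (j + 2*m)"
proof (induction m)
  case 0 then show ?case by simp
next
  case (Suc m)
  then show ?case using zG[of "j+2*m"] yG[of "i+2*m"] Gf_mono zb by simp
qed

lemma ychG: "ych a (t+2) = Gf (ych a t)" by simp
lemma xchE: "xch s (t+2) = Ef (xch s t)" by simp

end

locale kupa = kup +
  fixes a :: nat
  assumes a_lt: "a < n"
begin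

abbreviation "La \<equiv> Lc a"
abbreviation "ya \<equiv> ych a"
abbreviation "sa \<equiv> ych a (Lc a)"
abbreviation "xa \<equiv> xch (ych a (Lc a))"

lemma yb: "ya t \<le> n" using ych_le_n[OF a_lt] .
lemma yG: "ya (t+2) = Gf (ya t)" by simp
lemma xE: "xa (t+2) = Ef (xa t)" by simp
lemma sa_range: "1 \<le> sa" "sa \<le> n" using sigma_range[OF a_lt] by auto
lemma xb: "xa t \<le> n" using xch_le_n sa_range by auto
lemma yst: "j \<le> La \<Longrightarrow> ya (j+1) < ya j" using Lc_props[OF a_lt] by auto
lemma yterm: "ya (La + 2) = ya (La + 1)" using Lc_props[OF a_lt] by auto
lemma x0: "xa 0 = ya (La + 1)" using yterm by (simp add: numeral_2_eq_2)
lemma x1: "xa 1 = ya La" by simp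

lemma S1: "j \<le> La \<Longrightarrow> ya (La + 1 - j) \<le> xa j \<and> xa j < ya (La - j)"
proof -
  assume j: "j \<le> La"
  note lo = prop_EG_lower[where w=xa and y=ya, OF xE yG yb] and up = prop_EG_upper[where w=xa and y=ya, OF xE yG yb]
  have b0u: "xa 0 < ya La" using x0 yst[of La] by simp
  consider (ev) "j = 2*(j div 2)" | (od) "j = 2*(j div 2) + 1" using nat_parity_split by blast
  then show ?thesis
  proof cases
    case ev
    define m where "m = j div 2"
    have "ya (La + 1 - 2*m) \<le> xa (0 + 2*m)" using lo[of "La+1" 0 m] x0 ev j m_def by simp
    moreover have "xa (0 + 2*m) < ya (La - 2*m)" using up[of 0 La m] b0u ev j m_def by simp
    ultimately show ?thesis using ev m_def by simp
  next
    case od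
    define m where "m = j div 2"
    have L1: "1 \<le> La" using od j by simp
    have b1u: "xa 1 < ya (La - 1)" using yst[of "La - 1"] L1 by simp
    have "ya (La - 2*m) \<le> xa (1 + 2*m)" using lo[of La 1 m] od j m_def by simp
    moreover have "xa (1 + 2*m) < ya (La - 1 - 2*m)" using up[of 1 "La - 1" m] b1u od j m_def by simp
    moreover have "La + 1 - j = La - 2*m" "La - 1 - 2*m = La - j" "1 + 2*m = j" using od m_def j by simp_all
    ultimately show ?thesis by metis
  qed
qed

lemma xL1: "xa (La + 1) = ya 0"
proof (cases "La = 0")
  case True then show ?thesis by simp
next
  case False
  have h: "ya 2 \<le> xa (La - 1)" "xa (La - 1) < ya 1" using S1[of "La - 1"] False by auto
  have e: "xa (La + 1) = Ef (xa (La - 1))" using xE[of "La - 1"] False by simp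
  have "Ef (xa (La - 1)) \<le> Ef a" using Ef_mono h(2) by simp
  moreover have "ya 0 \<le> Ef (ya 2)" using EG[OF yb[of 0]] by (simp add: numeral_2_eq_2)
  moreover have "Ef (ya 2) \<le> Ef (xa (La - 1))" using Ef_mono h(1) by simp
  ultimately show ?thesis using e by simp
qed

lemma x_strict: "j \<le> La \<Longrightarrow> xa j < xa (j+1)"
proof -
  assume j: "j \<le> La"
  show ?thesis
  proof (cases "j = La")
    case True then show ?thesis using S1[of La] xL1 by simp
  next
    case False
    then have "xa j < ya (La - j)" "ya (La + 1 - (j+1)) \<le> xa (j+1)" using S1[of j] S1[of "j+1"] j by auto
    then show ?thesis by simp
  qed
qed

lemma pd_ge: "La \<le> pd sa"
proof (rule ccontr)
  assume "\<not> ?thesis"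
  then have "pd sa \<le> La - 1" "1 \<le> La" by auto
  then obtain i where "i \<le> La - 1 + 1" "xa (i+1) = xa i" using pd_le_iff[OF sa_range] by blast
  then show False using x_strict[of i] \<open>1 \<le> La\<close> by simp
qed

lemma xL_ge: "a \<le> xa La" using S1[of La] by simp
lemma xL_lt: "xa La < n" using S1[of La] yb[of 0] by simp

lemma regK: "pd sa \<le> La \<Longrightarrow> Ef (xa La) = ya 0"
proof -
  assume "pd sa \<le> La"
  then obtain i where i: "i \<le> La + 1" "xa (i+1) = xa i" using pd_le_iff[OF sa_range] by blast
  then have "i = La + 1" using x_strict[of i] by (metis le_Suc_eq less_irrefl Suc_eq_plus1)
  then show ?thesis using i xL1 xE[of La] by (simp add: numeral_2_eq_2)
qed

lemma pd_eq: "pd sa \<le> La \<Longrightarrow> pd sa = La" using pd_ge by simp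

end

context kupa begin

lemma lemC: assumes pdL: "pd sa \<le> La" and ne: "xa La \<noteq> a"
  shows "\<exists>k < La. \<not> pd (ya k) \<le> k"
proof -
  define b where "b = xa La"
  have hb: "a < b" using xL_ge ne b_def by simp
  have bn: "b < n" using xL_lt b_def by simp
  define z where "z = ych b"
  have zG: "\<And>t. z (t+2) = Gf (z t)" unfolding z_def by simp
  have zb: "\<And>t. z t \<le> n" unfolding z_def using ych_le_n[OF bn] .
  have z0: "z 0 = ya 0" unfolding z_def using regK[OF pdL] b_def by simp
  have z1: "z 1 = b" unfolding z_def by simp
  have zev: "\<And>m. z (2*m) = ya (2*m)"
  proof -
    fix m show "z (2*m) = ya (2*m)"
    proof (induction m)
      case 0 then show ?case using z0 by simp
    next
      case (Suc m)
      have "z (2*Suc m) = Gf (z (2*m))" using zG[of "2*m"] by simp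
      also have "\<dots> = Gf (ya (2*m))" using Suc by simp
      also have "\<dots> = ya (2*Suc m)" using yG[of "2*m"] by simp
      finally show ?case .
    qed
  qed
  have zodd: "\<And>m. ya (1+2*m) \<le> z (1+2*m)"
    using prop_GG[where z=z and y=ya, OF zG yG zb, of 1 1] z1 hb by simp
  have zge: "\<And>j. ya j \<le> z j"
  proof -
    fix j
    show "ya j \<le> z j"
      using nat_parity_split[of j] zev[of "j div 2"] zodd[of "j div 2"] by (metis add.commute le_refl)
  qed
  note gu = prop_GE_upper[where z=z and x=xa, OF zG xE xb]
  have zup: "\<And>j. j \<le> La + 1 \<Longrightarrow> z j \<le> xa (La + 1 - j)"
  proof -
    fix j assume j: "j \<le> La + 1"
    consider (ev) "j = 2*(j div 2)" | (od) "j = 2*(j div 2) + 1" using nat_parity_split by blast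
    then show "z j \<le> xa (La + 1 - j)"
    proof cases
      case ev
      have "z (0 + 2*(j div 2)) \<le> xa (La + 1 - 2*(j div 2))"
        using gu[of 0 "La+1" "j div 2"] z0 xL1 j ev by simp
      then show ?thesis using ev by simp
    next
      case od
      have "z (1 + 2*(j div 2)) \<le> xa (La - 2*(j div 2))"
        using gu[of 1 La "j div 2"] z1 b_def j od by simp
      moreover have "La - 2*(j div 2) = La + 1 - j" using od j by simp
      ultimately show ?thesis using od by (metis add.commute)
    qed
  qed
  have zL: "z La = ya La" using zup[of La] zge[of La] by simp
  have zL1: "z (La+1) = ya (La+1)" using zup[of "La+1"] zge[of "La+1"] x0 by simp
  define M where "M = (if odd La then La div 2 else (La + 1) div 2)"
  have oM: "2*M+1 \<le> La + 1" "z (2*M+1) = ya (2*M+1)"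
    using zL zL1 unfolding M_def by (auto elim!: oddE evenE)
  define P where "P = (\<lambda>m. ya (2*m+1) < z (2*m+1))"
  have P0: "P 0" unfolding P_def using z1 hb by simp
  have PM: "\<not> P M" unfolding P_def using oM by simp
  obtain m where m: "m < M" "P m" "\<not> P (Suc m)" using discrete_ivt[of P M, OF P0 PM] by blast
  define k where "k = 2*m+1"
  have kL: "k + 2 \<le> La + 1" using m(1) oM(1) k_def by simp
  have zk2: "z (k+2) = ya (k+2)" using m(3) zge[of "k+2"] unfolding P_def k_def by (simp add: algebra_simps)
  have zk1: "z (k+1) = ya (k+1)" using zev[of "m+1"] unfolding k_def by (simp add: algebra_simps)
  have zk: "ya k < z k" using m(2) unfolding P_def k_def .
  define q where "q = ya k"
  have q1: "1 \<le> q" using yst[of k] kL q_def by simp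
  have qn: "q \<le> n" using yb q_def by simp
  define w where "w = xch q"
  have wE: "\<And>t. w (t+2) = Ef (w t)" unfolding w_def by simp
  have w0: "w 0 = z (k+2)" unfolding w_def q_def using zk2 yG[of k] by simp
  have w1: "w 1 = ya k" unfolding w_def q_def by simp
  have b0u: "w 0 < z (k+1)" using w0 zk2 zk1 yst[of "k+1"] kL by simp
  have b1l: "z (k+1) \<le> w 1" using w1 zk1 ych_dec[OF a_lt, of k] by simp
  have b1u: "w 1 < z k" using w1 zk by simp
  note lo = prop_EG_lower[where w=w and y=z, OF wE zG zb]
  note up = prop_EG_upper[where w=w and y=z, OF wE zG zb]
  have str: "\<And>i. i \<le> k+1 \<Longrightarrow> w i < w (i+1)"
  proof -
    fix i assume i: "i \<le> k+1"
    consider (ev) "i = 2*(i div 2)" | (od) "i = 2*(i div 2) + 1" using nat_parity_split by blast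
    then show "w i < w (i+1)"
    proof cases
      case ev
      define m' where "m' = i div 2"
      have "w (0 + 2*m') < z (k + 1 - 2*m')" using up[of 0 "k+1" m'] b0u i ev m'_def by simp
      moreover have "z (k + 1 - 2*m') \<le> w (1 + 2*m')" using lo[of "k+1" 1 m'] b1l i ev m'_def by simp
      ultimately show ?thesis using ev m'_def by (metis add.commute add_0 less_le_trans)
    next
      case od
      define m' where "m' = i div 2"
      have X: "w (1 + 2*m') < z (k - 2*m')" using up[of 1 k m'] b1u i od m'_def by simp
      have L0: "z (k+2) \<le> w 0" using w0 by simp
      have Y: "z (k + 2 - 2*(m'+1)) \<le> w (0 + 2*(m'+1))" by (rule lo[OF L0]) (use i od m'_def in simp)
      have E: "k + 2 - 2*(m'+1) = k - 2*m'" "0 + 2*(m'+1) = i + 1" "1 + 2*m' = i" using i od m'_def by simp_all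
      show ?thesis using X Y unfolding E by simp
    qed
  qed
  have "\<not> pd q \<le> k"
  proof
    assume "pd q \<le> k"
    then obtain i where "i \<le> k+1" "xch q (i+1) = xch q i" using pd_le_iff[OF q1 qn] by blast
    then show False using str[of i] w_def by simp
  qed
  then show ?thesis using kL q_def by (intro exI[of _ k]) simp
qed

lemma lemB2: assumes xa_eq: "xa La = a"
  shows "\<forall>k \<le> La. pd (ya k) \<le> k"
proof (intro allI impI)
  fix k assume k: "k \<le> La"
  note gu = prop_GE_upper[where z=ya and x=xa, OF yG xE xb]
  have yup: "\<And>j. j \<le> La + 1 \<Longrightarrow> ya j \<le> xa (La + 1 - j)"
  proof -
    fix j assume j: "j \<le> La + 1"
    consider (ev) "j = 2*(j div 2)" | (od) "j = 2*(j div 2) + 1" using nat_parity_split by blast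
    then show "ya j \<le> xa (La + 1 - j)"
    proof cases
      case ev
      have "ya (0 + 2*(j div 2)) \<le> xa (La + 1 - 2*(j div 2))"
        using gu[of 0 "La+1" "j div 2"] xL1 j ev by simp
      then show ?thesis using ev by simp
    next
      case od
      have "ya (1 + 2*(j div 2)) \<le> xa (La - 2*(j div 2))"
        using gu[of 1 La "j div 2"] xa_eq j od by simp
      moreover have "La - 2*(j div 2) = La + 1 - j" using od j by simp
      ultimately show ?thesis using od by (metis add.commute)
    qed
  qed
  show "pd (ya k) \<le> k"
  proof (cases "k = La")
    case True
    have "xa (La+1+1) = xa (La+1)" using xE[of La] xa_eq xL1 by (simp add: numeral_2_eq_2)
    then show ?thesis using pd_le_iff[OF sa_range] True by blast
  next
    case False
    then have kL: "k < La" using k by simp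
    define q where "q = ya k"
    have q1: "1 \<le> q" using yst[of k] kL q_def by simp
    have qn: "q \<le> n" using yb q_def by simp
    define w where "w = xch q"
    have wE: "\<And>t. w (t+2) = Ef (w t)" unfolding w_def by simp
    have w0: "w 0 = ya (k+2)" unfolding w_def q_def using yG[of k] by simp
    have w1: "w 1 = ya k" unfolding w_def q_def by simp
    note upE = prop_EE[where w=w and x=xa, OF wE xE]
    note lo = prop_EG_lower[where w=w and y=ya, OF wE yG yb]
    have u0: "w 0 \<le> xa (La + 1 - (k+2))" using yup[of "k+2"] kL w0 by simp
    have u1: "w 1 \<le> xa (La + 1 - k)" using yup[of k] kL w1 by simp
    consider (ev) "k = 2*(k div 2)" | (od) "k = 2*(k div 2) + 1" using nat_parity_split by blast
    then show ?thesis
    proof cases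
      case od
      define M where "M = k div 2"
      have A: "w (0 + 2*(M+1)) \<le> xa (La + 1 - (k+2) + 2*(M+1))" using upE[OF u0] .
      have A': "La + 1 - (k+2) + 2*(M+1) = La" "0 + 2*(M+1) = k+1" using od kL M_def by simp_all
      have L0: "ya (k+2) \<le> w 0" using w0 by simp
      have B: "ya (k + 2 - 2*(M+1)) \<le> w (0 + 2*(M+1))" by (rule lo[OF L0]) (use M_def in simp)
      have L1: "ya k \<le> w 1" using w1 by simp
      have C: "ya (k - 2*M) \<le> w (1 + 2*M)" by (rule lo[OF L1]) (use M_def in simp)
      have C': "k + 2 - 2*(M+1) = 1" "k - 2*M = 1" "1 + 2*M = k" using od M_def by simp_all
      have D: "w k \<le> w (k+1)" unfolding w_def using xch_inc[OF qn] .
      have A2: "w (k+1) \<le> a" using A unfolding A' xa_eq .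
      have B2: "a \<le> w k" using C unfolding C' by simp
      have "w (k+1) = w k" using A2 B2 D by simp
      then show ?thesis using pd_le_iff[OF q1 qn] w_def q_def by (metis le_add1)
    next
      case ev
      define M where "M = k div 2"
      have A: "w (0 + 2*(M+1)) \<le> xa (La + 1 - (k+2) + 2*(M+1))" using upE[OF u0] .
      have A': "La + 1 - (k+2) + 2*(M+1) = La + 1" "0 + 2*(M+1) = k+1+1" using ev kL M_def by simp_all
      have L1: "ya k \<le> w 1" using w1 by simp
      have C: "ya (k - 2*M) \<le> w (1 + 2*M)" by (rule lo[OF L1]) (use M_def in simp)
      have C': "k - 2*M = 0" "1 + 2*M = k + 1" using ev M_def by simp_all
      have D: "w (k+1) \<le> w (k+1+1)" unfolding w_def using xch_inc[OF qn] .
      have A2: "w (k+1+1) \<le> ya 0" using A unfolding A' xL1 .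
      have C2: "ya 0 \<le> w (k+1)" using C unfolding C' .
      have "w (k+1+1) = w (k+1)" using A2 C2 D by simp
      then show ?thesis using pd_le_iff[OF q1 qn] w_def q_def by (metis le_refl)
    qed
  qed
qed

end

context kup begin

lemma dual: assumes s: "1 \<le> s" "s \<le> n"
  shows "ych (xch s (pd s)) (Lc (xch s (pd s))) \<le> s"
proof -
  define x where "x = xch s"
  define K where "K = pd s"
  define b where "b = x K"
  have bn: "b < n" using psi_range[OF s] b_def x_def K_def by simp
  define z where "z = ych b"
  have zG: "\<And>t. z (t+2) = Gf (z t)" unfolding z_def by simp
  have zb: "\<And>t. z t \<le> n" unfolding z_def using ych_le_n[OF bn] .
  have xE: "\<And>t. x (t+2) = Ef (x t)" unfolding x_def by simp
  have xb: "\<And>t. x t \<le> n" unfolding x_def using xch_le_n s by simp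
  have xstr: "\<And>j. j \<le> K \<Longrightarrow> x j < x (j+1)" using pd_props[OF s] x_def K_def by simp
  have xK2: "x (K+2) = x (K+1)" using pd_props[OF s] x_def K_def by simp
  have z0: "z 0 = x (K+1)" unfolding z_def b_def using xE[of K] xK2 by simp
  have z1: "z 1 = x K" unfolding z_def b_def by simp
  note gu = prop_GE_upper[where z=z and x=x, OF zG xE xb]
  note gl = prop_GE_lower[where z=z and x=x, OF zG xE zb]
  have zup: "\<And>j. j \<le> K + 1 \<Longrightarrow> z j \<le> x (K + 1 - j)"
  proof -
    fix j assume j: "j \<le> K + 1"
    consider (ev) "j = 2*(j div 2)" | (od) "j = 2*(j div 2) + 1" using nat_parity_split by blast
    then show "z j \<le> x (K + 1 - j)"
    proof cases
      case ev
      have "z (0 + 2*(j div 2)) \<le> x (K + 1 - 2*(j div 2))"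
        using gu[of 0 "K+1" "j div 2"] z0 j ev by simp
      then show ?thesis using ev by simp
    next
      case od
      have "z (1 + 2*(j div 2)) \<le> x (K - 2*(j div 2))"
        using gu[of 1 K "j div 2"] z1 j od by simp
      moreover have "K - 2*(j div 2) = K + 1 - j" using od j by simp
      ultimately show ?thesis using od by (metis add.commute)
    qed
  qed
  have zlo: "\<And>j. j \<le> K \<Longrightarrow> x (K - j) < z j"
  proof -
    fix j assume j: "j \<le> K"
    consider (ev) "j = 2*(j div 2)" | (od) "j = 2*(j div 2) + 1" using nat_parity_split by blast
    then show "x (K - j) < z j"
    proof cases
      case ev
      have "x (K - 2*(j div 2)) < z (0 + 2*(j div 2))"
        using gl[of K 0 "j div 2"] z0 xstr[of K] j ev by simp
      then show ?thesis using ev by simp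
    next
      case od
      have "x (K - 1) < z 1" using z1 xstr[of "K-1"] od j by simp
      then have "x (K - 1 - 2*(j div 2)) < z (1 + 2*(j div 2))"
        using gl[of "K-1" 1 "j div 2"] j od by simp
      moreover have "K - 1 - 2*(j div 2) = K - j" using od j by simp
      ultimately show ?thesis using od by (metis add.commute)
    qed
  qed
  have zstr: "\<And>j. j \<le> K \<Longrightarrow> z (j+1) < z j"
  proof -
    fix j assume j: "j \<le> K"
    have "z (j+1) \<le> x (K + 1 - (j+1))" using zup[of "j+1"] j by simp
    then show "z (j+1) < z j" using zlo[OF j] by simp
  qed
  have KL: "K \<le> Lc b"
  proof (rule ccontr)
    assume "\<not> ?thesis"
    then have "Lc b + 1 \<le> K" by simp
    then have "z (Lc b + 1 + 1) < z (Lc b + 1)" using zstr by blast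
    then show False using Lc_props[OF bn] z_def by (simp add: numeral_2_eq_2)
  qed
  have "z (Lc b) \<le> z K" unfolding z_def using ych_dec_le[OF bn KL] .
  also have "\<dots> \<le> x 1" using zup[of K] by simp
  finally show ?thesis using b_def x_def K_def z_def by simp
qed

end

lemma mult_entry: assumes "A \<in> carrier_mat n n" "B \<in> carrier_mat n n" "i < n" "j < n"
  shows "(A * B) $$ (i,j) = (\<Sum>m \<in> {0..<n}. A $$ (i,m) * B $$ (m,j))"
  using assms by (auto simp: scalar_prod_def intro: sum.cong)

lemma telescope: "(\<Sum>k \<in> {..L}. (-1::real)^k * (h k - h (k+2))) = h 0 - h 1 + (-1)^L * (h (L+1) - h (L+2))"
proof (induction L)
  case 0 then show ?case by (simp add: numeral_2_eq_2)
next
  case (Suc L)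
  have "(\<Sum>k \<in> {..Suc L}. (-1::real)^k * (h k - h (k+2))) =
        (\<Sum>k \<in> {..L}. (-1::real)^k * (h k - h (k+2))) + (-1)^(Suc L) * (h (Suc L) - h (Suc L + 2))"
    by simp
  also have "\<dots> = h 0 - h 1 + (-1)^L * (h (L+1) - h (L+2)) + (-1)^(Suc L) * (h (Suc L) - h (Suc L + 2))"
    using Suc by simp
  also have "\<dots> = h 0 - h 1 + (-1)^(Suc L) * (h (Suc L + 1) - h (Suc L + 2))"
    by (simp add: algebra_simps numeral_2_eq_2)
  finally show ?case by simp
qed

lemma prod_list_ones: "\<forall>x \<in> set xs. x = (1::'a::monoid_mult) \<Longrightarrow> prod_list xs = 1"
  by (induction xs) auto

context kup begin

abbreviation "Cm \<equiv> cartan n c"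

lemma Cm_carrier: "Cm \<in> carrier_mat n n" unfolding cartan_def by simp

lemma Cm_entry: "i < n \<Longrightarrow> j < n \<Longrightarrow> Cm $$ (i,j) = (if j \<le> i \<and> i < Ef j then 1 else 0)"
  unfolding cartan_def Ef_def by simp

lemma Cm_det: "det Cm = 1"
proof -
  have ut: "upper_triangular (transpose_mat Cm)"
    by (rule upper_triangularI) (use Cm_carrier Cm_entry in auto)
  have "det Cm = det (transpose_mat Cm)" using det_transpose[OF Cm_carrier] by simp
  also have "\<dots> = prod_list (diag_mat (transpose_mat Cm))"
    using det_upper_triangular[OF ut] Cm_carrier by simp
  also have "\<dots> = 1"
  proof -
    have "\<forall>x \<in> set (diag_mat (transpose_mat Cm)). x = 1"
      using Cm_carrier Cm_entry Ef_gt unfolding diag_mat_def by auto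
    then show ?thesis using prod_list_ones by blast
  qed
  finally show ?thesis .
qed

definition Ci where "Ci = the (mat_inverse Cm)"

lemma Ci_props: "Cm * Ci = 1\<^sub>m n \<and> Ci * Cm = 1\<^sub>m n \<and> Ci \<in> carrier_mat n n"
proof -
  have u: "Cm \<in> Units (ring_mat TYPE(real) n ())"
    using det_non_zero_imp_unit[OF Cm_carrier] Cm_det by simp
  have "mat_inverse Cm \<noteq> None" using mat_inverse(1)[OF Cm_carrier, of "()"] u by blast
  then obtain B where B: "mat_inverse Cm = Some B" by auto
  then show ?thesis using mat_inverse(2)[OF Cm_carrier B] unfolding Ci_def by simp
qed

definition Um :: "real mat" where
  "Um = mat n n (\<lambda>(i,m). \<Sum>k \<in> {..Lc i}. (-1)^k * (if m + 1 = ych i k then 1 else 0))"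

definition Vm :: "real mat" where
  "Vm = mat n n (\<lambda>(s,t). \<Sum>j \<in> {..pd (s+1)}. (-1)^j * (if t = xch (s+1) j then 1 else 0))"

lemma Um_carrier: "Um \<in> carrier_mat n n" unfolding Um_def by simp
lemma Vm_carrier: "Vm \<in> carrier_mat n n" unfolding Vm_def by simp

lemma UC: "Um * Cm = transpose_mat Cm"
proof (rule eq_matI)
  show "dim_row (Um * Cm) = dim_row (transpose_mat Cm)" "dim_col (Um * Cm) = dim_col (transpose_mat Cm)"
    using Um_carrier Cm_carrier by auto
  fix i j assume "i < dim_row (transpose_mat Cm)" "j < dim_col (transpose_mat Cm)"
  then have ij: "i < n" "j < n" using Cm_carrier by auto
  interpret kupa n c i using K ij by unfold_locales auto
  let ?L = "Lc i"
  have "(Um * Cm) $$ (i,j) = (\<Sum>m \<in> {0..<n}. Um $$ (i,m) * Cm $$ (m,j))"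
    using mult_entry[OF Um_carrier Cm_carrier ij] .
  also have "\<dots> = (\<Sum>m \<in> {0..<n}. \<Sum>k \<in> {..?L}. (-1)^k * (if m + 1 = ya k then Cm $$ (m,j) else 0))"
    unfolding Um_def using ij by (auto simp: sum_distrib_right intro!: sum.cong)
  also have "\<dots> = (\<Sum>k \<in> {..?L}. \<Sum>m \<in> {0..<n}. (-1)^k * (if m = ya k - 1 then Cm $$ (m,j) else 0))"
  proof -
    have "\<And>k m. k \<le> ?L \<Longrightarrow> (m + 1 = ya k) = (m = ya k - 1)"
      using yst yb by (metis add_diff_cancel_right' le_add1 le_less_trans less_imp_add_positive not_less_zero zero_less_iff_neq_zero Suc_eq_plus1 Suc_pred)
    then show ?thesis by (subst sum.swap) (auto intro!: sum.cong)
  qed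
  also have "\<dots> = (\<Sum>k \<in> {..?L}. (-1)^k * Cm $$ (ya k - 1, j))"
  proof (rule sum.cong[OF refl])
    fix k assume k: "k \<in> {..?L}"
    have "1 \<le> ya k" using yst[of k] k by simp
    then have "ya k - 1 < n" using yb[of k] by simp
    then show "(\<Sum>m \<in> {0..<n}. (-1)^k * (if m = ya k - 1 then Cm $$ (m,j) else 0)) = (-1)^k * Cm $$ (ya k - 1, j)"
      by (simp add: sum_distrib_left[symmetric] sum.delta)
  qed
  also have "\<dots> = (\<Sum>k \<in> {..?L}. (-1::real)^k * ((\<lambda>t. if j < ya t then 1 else 0) k - (\<lambda>t. if j < ya t then 1 else 0) (k+2)))"
  proof (rule sum.cong[OF refl])
    fix k assume k: "k \<in> {..?L}"
    have y1: "1 \<le> ya k" using yst[of k] k by simp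
    have g: "Gf (ya k) \<le> j \<longleftrightarrow> ya k \<le> Ef j" using galois[OF yb] .
    have le: "ya (k+2) \<le> ya k" using Gf_le[OF yb[of k]] by simp
    have "Cm $$ (ya k - 1, j) = (if j < ya k \<and> ya k \<le> Ef j then 1 else 0)"
      using Cm_entry[of "ya k - 1" j] y1 yb[of k] ij by auto
    also have "\<dots> = (if j < ya k then 1 else 0) - (if j < ya (k+2) then 1 else 0)"
      using g le by auto
    finally show "(-1::real)^k * Cm $$ (ya k - 1, j) = (-1)^k * ((\<lambda>t. if j < ya t then 1 else 0) k - (\<lambda>t. if j < ya t then 1 else 0) (k+2))"
      by simp
  qed
  also have "\<dots> = (if j < ya 0 then 1 else 0) - (if j < ya 1 then 1 else 0)"
    using telescope[of "\<lambda>t. if j < ya t then 1 else (0::real)" ?L] yterm by simp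
  also have "\<dots> = transpose_mat Cm $$ (i,j)"
    using Cm_entry[of j i] ij Ef_gt[of i] Cm_carrier by auto
  finally show "(Um * Cm) $$ (i,j) = transpose_mat Cm $$ (i,j)" .
qed

end

context kup begin

lemma VC: "Vm * transpose_mat Cm = Cm"
proof (rule eq_matI)
  show "dim_row (Vm * transpose_mat Cm) = dim_row Cm" "dim_col (Vm * transpose_mat Cm) = dim_col Cm"
    using Vm_carrier Cm_carrier by auto
  fix s t assume "s < dim_row Cm" "t < dim_col Cm"
  then have st: "s < n" "t < n" using Cm_carrier by auto
  have s1: "1 \<le> s+1" "s+1 \<le> n" using st by auto
  define x where "x = xch (s+1)"
  define K where "K = pd (s+1)"
  have xlt: "\<And>j. j \<le> K \<Longrightarrow> x j < n"
    using xch_inc_le[OF s1(2)] psi_range[OF s1] unfolding x_def K_def by (meson le_less_trans)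
  have "(Vm * transpose_mat Cm) $$ (s,t) = (\<Sum>m \<in> {0..<n}. Vm $$ (s,m) * transpose_mat Cm $$ (m,t))"
    using mult_entry[OF Vm_carrier _ st] Cm_carrier by simp
  also have "\<dots> = (\<Sum>m \<in> {0..<n}. \<Sum>j \<in> {..K}. (-1)^j * (if m = x j then Cm $$ (t,m) else 0))"
    unfolding Vm_def x_def K_def using st Cm_carrier by (auto simp: sum_distrib_right intro!: sum.cong)
  also have "\<dots> = (\<Sum>j \<in> {..K}. \<Sum>m \<in> {0..<n}. (-1)^j * (if m = x j then Cm $$ (t,m) else 0))"
    by (rule sum.swap)
  also have "\<dots> = (\<Sum>j \<in> {..K}. (-1)^j * Cm $$ (t, x j))"
  proof (rule sum.cong[OF refl])
    fix j assume j: "j \<in> {..K}"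
    then have "x j < n" using xlt by simp
    then show "(\<Sum>m \<in> {0..<n}. (-1)^j * (if m = x j then Cm $$ (t,m) else 0)) = (-1)^j * Cm $$ (t, x j)"
      by (simp add: sum_distrib_left[symmetric] sum.delta)
  qed
  also have "\<dots> = (\<Sum>j \<in> {..K}. (-1::real)^j * ((\<lambda>u. if x u \<le> t then 1 else 0) j - (\<lambda>u. if x u \<le> t then 1 else 0) (j+2)))"
  proof (rule sum.cong[OF refl])
    fix j assume j: "j \<in> {..K}"
    have e: "x (j+2) = Ef (x j)" unfolding x_def by simp
    have le: "x j \<le> x (j+2)" unfolding x_def using xch_inc_le[OF s1(2), of j "j+2"] by simp
    have "Cm $$ (t, x j) = (if x j \<le> t \<and> t < x (j+2) then 1 else 0)"
      using Cm_entry[of t "x j"] st xlt j e by auto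
    also have "\<dots> = (if x j \<le> t then 1 else 0) - (if x (j+2) \<le> t then 1 else 0)"
      using le by auto
    finally show "(-1::real)^j * Cm $$ (t, x j) = (-1)^j * ((\<lambda>u. if x u \<le> t then 1 else 0) j - (\<lambda>u. if x u \<le> t then 1 else 0) (j+2))"
      by simp
  qed
  also have "\<dots> = (if x 0 \<le> t then 1 else 0) - (if x 1 \<le> t then 1 else 0)"
    using telescope[of "\<lambda>u. if x u \<le> t then 1 else (0::real)" K] pd_props[OF s1] unfolding x_def K_def by simp
  also have "\<dots> = Cm $$ (s,t)"
  proof -
    have "x 0 = Gf (s+1)" "x 1 = s+1" unfolding x_def by auto
    moreover have "Gf (s+1) \<le> t \<longleftrightarrow> s+1 \<le> Ef t" using galois[OF s1(2)] .
    ultimately show ?thesis using Cm_entry[OF st] Gf_le[OF s1(2)] by auto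
  qed
  finally show "(Vm * transpose_mat Cm) $$ (s,t) = Cm $$ (s,t)" .
qed

lemma Um_eq: "Um = transpose_mat Cm * Ci"
proof -
  have "Um = Um * (Cm * Ci)" using Ci_props Um_carrier by simp
  also have "\<dots> = (Um * Cm) * Ci" using Um_carrier Cm_carrier Ci_props by (metis assoc_mult_mat)
  also have "\<dots> = transpose_mat Cm * Ci" using UC by simp
  finally show ?thesis .
qed

lemma cox_eq: "coxeter n c = - Um"
  unfolding coxeter_def using Um_eq Ci_def by simp

lemma VU: "Vm * Um = 1\<^sub>m n"
proof -
  have "Vm * Um = Vm * (transpose_mat Cm * Ci)" using Um_eq by simp
  also have "\<dots> = (Vm * transpose_mat Cm) * Ci" using Vm_carrier Cm_carrier Ci_props
    by (metis assoc_mult_mat transpose_carrier_mat)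
  also have "\<dots> = 1\<^sub>m n" using VC Ci_props by simp
  finally show ?thesis .
qed

definition tau :: "nat \<Rightarrow> nat" where "tau i = ych i (Lc i) - 1"

lemma Um_row: assumes i: "i < n" and m: "m < n"
  shows "(m < tau i \<longrightarrow> Um $$ (i,m) = 0) \<and> (m = tau i \<longrightarrow> Um $$ (i,m) = (-1)^(Lc i))"
proof -
  interpret kupa n c i using K i by unfold_locales auto
  have s1: "1 \<le> sa" using sa_range by simp
  have dec: "\<And>k. k \<le> La \<Longrightarrow> sa \<le> ya k" using ych_dec_le[OF i] by simp
  have dec2: "\<And>k. k < La \<Longrightarrow> sa < ya k"
  proof -
    fix k assume k: "k < La"
    have "ya La \<le> ya (k+1)" using ych_dec_le[OF i, of "k+1" La] k by simp
    then show "sa < ya k" using yst[of k] k by simp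
  qed
  have U: "Um $$ (i,m) = (\<Sum>k \<in> {..La}. (-1)^k * (if m + 1 = ya k then 1 else 0))"
    unfolding Um_def using i m by simp
  have A: "m < tau i \<longrightarrow> Um $$ (i,m) = 0"
  proof
    assume "m < tau i"
    then have "\<forall>k \<in> {..La}. m + 1 \<noteq> ya k" using dec s1 unfolding tau_def by fastforce
    then show "Um $$ (i,m) = 0" using U by simp
  qed
  have B: "m = tau i \<longrightarrow> Um $$ (i,m) = (-1)^La"
  proof
    assume mt: "m = tau i"
    have "Um $$ (i,m) = (\<Sum>k \<in> {..La}. if k = La then (-1)^k else 0)"
      unfolding U
    proof (rule sum.cong[OF refl])
      fix k assume k: "k \<in> {..La}"
      show "(-1)^k * (if m + 1 = ya k then 1 else 0) = (if k = La then (-1::real)^k else 0)"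
        using mt s1 dec2[of k] k unfolding tau_def by (cases "k = La") auto
    qed
    also have "\<dots> = (-1)^La" by (simp add: sum.delta')
    finally show "Um $$ (i,m) = (-1)^La" .
  qed
  show ?thesis using A B by simp
qed

lemma tau_lt: "i < n \<Longrightarrow> tau i < n"
  using sigma_range unfolding tau_def by (meson diff_less le_less_trans less_one not_le)

lemma tau_sigma: "i < n \<Longrightarrow> inv_AR_map c (i+1) = tau i + 1"
proof -
  assume i: "i < n"
  have "1 \<le> ych i (Lc i)" using sigma_range[OF i] by simp
  then show ?thesis using sigma_eq[OF i] unfolding tau_def by simp
qed

end

context kup begin

lemma xch_strict_mono: assumes s: "1 \<le> s" "s \<le> n" and jj: "j < j'" "j' \<le> pd s + 1"
  shows "xch s j < xch s j'"
  using jj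
proof (induction j')
  case 0 then show ?case by simp
next
  case (Suc j')
  have st: "xch s j' < xch s (j'+1)" using pd_props[OF s] Suc(3) by simp
  show ?case
  proof (cases "j = j'")
    case True then show ?thesis using st by simp
  next
    case False then show ?thesis using Suc st by simp
  qed
qed

lemma VU_entry: assumes s0: "s0 < n" and m: "m < n"
  shows "(Vm * Um) $$ (s0, m) = (\<Sum>j \<in> {..pd (s0+1)}. (-1)^j * Um $$ (xch (s0+1) j, m))"
proof -
  have s1: "1 \<le> s0+1" "s0+1 \<le> n" using s0 by auto
  define x where "x = xch (s0+1)"
  define K where "K = pd (s0+1)"
  have xlt: "\<And>j. j \<le> K \<Longrightarrow> x j < n"
    using xch_inc_le[OF s1(2)] psi_range[OF s1] unfolding x_def K_def by (meson le_less_trans)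
  have "(Vm * Um) $$ (s0, m) = (\<Sum>t \<in> {0..<n}. Vm $$ (s0,t) * Um $$ (t,m))"
    using mult_entry[OF Vm_carrier Um_carrier s0 m] .
  also have "\<dots> = (\<Sum>t \<in> {0..<n}. \<Sum>j \<in> {..K}. (-1)^j * (if t = x j then Um $$ (t,m) else 0))"
    unfolding Vm_def x_def K_def using s0 by (auto simp: sum_distrib_right intro!: sum.cong)
  also have "\<dots> = (\<Sum>j \<in> {..K}. \<Sum>t \<in> {0..<n}. (-1)^j * (if t = x j then Um $$ (t,m) else 0))"
    by (rule sum.swap)
  also have "\<dots> = (\<Sum>j \<in> {..K}. (-1)^j * Um $$ (x j, m))"
  proof (rule sum.cong[OF refl])
    fix j assume j: "j \<in> {..K}"
    then have "x j < n" using xlt by simp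
    then show "(\<Sum>t \<in> {0..<n}. (-1)^j * (if t = x j then Um $$ (t,m) else 0)) = (-1)^j * Um $$ (x j, m)"
      by (simp add: sum_distrib_left[symmetric] sum.delta)
  qed
  finally show ?thesis unfolding x_def K_def .
qed

lemma b1: assumes inj: "inj_on tau {0..<n}" and s0: "s0 < n"
  shows "tau (xch (s0+1) (pd (s0+1))) = s0"
proof -
  have s1: "1 \<le> s0+1" "s0+1 \<le> n" using s0 by auto
  define x where "x = xch (s0+1)"
  define K where "K = pd (s0+1)"
  have xlt: "\<And>j. j \<le> K \<Longrightarrow> x j < n"
    using xch_inc_le[OF s1(2)] psi_range[OF s1] unfolding x_def K_def by (meson le_less_trans)
  have xinj: "\<And>j j'. j \<le> K \<Longrightarrow> j' \<le> K \<Longrightarrow> j \<noteq> j' \<Longrightarrow> x j \<noteq> x j'"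
  proof -
    fix j j' assume h: "j \<le> K" "j' \<le> K" "j \<noteq> j'"
    show "x j \<noteq> x j'"
    proof (cases "j < j'")
      case True
      then have "x j < x j'" using xch_strict_mono[OF s1, of j j'] h unfolding x_def K_def by simp
      then show ?thesis by simp
    next
      case False
      then have "j' < j" using h by simp
      then have "x j' < x j" using xch_strict_mono[OF s1, of j' j] h unfolding x_def K_def by simp
      then show ?thesis by simp
    qed
  qed
  obtain jm where jm: "jm \<le> K" "\<And>j. j \<le> K \<Longrightarrow> tau (x jm) \<le> tau (x j)"
    using ex_has_least_nat[of "\<lambda>j. j \<le> K" 0 "\<lambda>j. tau (x j)"] by auto
  define ms where "ms = tau (x jm)"
  have msn: "ms < n" using tau_lt xlt jm(1) ms_def by simp
  have "(Vm * Um) $$ (s0, ms) = (\<Sum>j \<in> {..K}. (-1)^j * Um $$ (x j, ms))"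
    using VU_entry[OF s0 msn] unfolding x_def K_def .
  also have "\<dots> = (\<Sum>j \<in> {..K}. if j = jm then (-1)^j * (-1)^(Lc (x jm)) else 0)"
  proof (rule sum.cong[OF refl])
    fix j assume j: "j \<in> {..K}"
    show "(-1)^j * Um $$ (x j, ms) = (if j = jm then (-1)^j * (-1)^(Lc (x jm)) else (0::real))"
    proof (cases "j = jm")
      case True
      then show ?thesis using Um_row[OF xlt[OF jm(1)] msn] ms_def by simp
    next
      case False
      then have "x j \<noteq> x jm" using xinj j jm(1) by simp
      then have "tau (x j) \<noteq> tau (x jm)" using inj xlt j jm(1) unfolding inj_on_def by auto
      then have "ms < tau (x j)" using jm(2)[of j] j ms_def by simp
      then show ?thesis using Um_row[OF xlt msn, of j] j False by simp
    qed
  qed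
  also have "\<dots> = (-1)^jm * (-1)^(Lc (x jm))" using jm(1) by (simp add: sum.delta')
  finally have ne: "(Vm * Um) $$ (s0, ms) \<noteq> 0" by simp
  have "ms = s0" using ne VU s0 msn by (auto split: if_splits)
  then have ge: "s0 \<le> tau (x K)" using jm(2)[of K] ms_def by simp
  have "ych (x K) (Lc (x K)) \<le> s0 + 1" using dual[OF s1] unfolding x_def K_def .
  then have "tau (x K) \<le> s0" unfolding tau_def by simp
  then show ?thesis using ge unfolding x_def K_def by simp
qed
end

context kup begin

lemma psi_range': "1 \<le> s \<Longrightarrow> s \<le> n \<Longrightarrow> 1 \<le> AR_perm c s \<and> AR_perm c s \<le> n"
proof -
  assume s: "1 \<le> s" "s \<le> n"
  have "AR_perm c s = xch s (pd s) + 1" using psi_eq[OF s] .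
  moreover have "xch s (pd s) < n" using psi_range[OF s] .
  ultimately show ?thesis by simp
qed

lemma sigma_range': "1 \<le> r \<Longrightarrow> r \<le> n \<Longrightarrow> 1 \<le> inv_AR_map c r \<and> inv_AR_map c r \<le> n"
proof -
  assume r: "1 \<le> r" "r \<le> n"
  then have a: "r - 1 < n" "r = r - 1 + 1" by auto
  have "inv_AR_map c (r - 1 + 1) = ych (r-1) (Lc (r-1))" using sigma_eq[OF a(1)] .
  then show ?thesis using sigma_range[OF a(1)] a(2) by metis
qed

lemma reg_imp_fix: assumes reg: "auslander_regular n c" and r: "1 \<le> r" "r \<le> n"
  shows "AR_perm c (inv_AR_map c r) = r"
proof -
  define a where "a = r - 1"
  have a: "a < n" "r = a + 1" using r a_def by auto
  interpret kupa n c a using K a by unfold_locales auto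
  have viol: "\<forall>k \<le> La. pd (ya k) \<le> k" using reg reg_iff a by blast
  have pdL: "pd sa \<le> La" using viol by simp
  have xa_eq: "xa La = a"
  proof (rule ccontr)
    assume "xa La \<noteq> a"
    then obtain k where "k < La" "\<not> pd (ya k) \<le> k" using lemC[OF pdL] by blast
    then show False using viol by simp
  qed
  have "AR_perm c sa = xa La + 1" using psi_eq[OF sa_range] pd_eq[OF pdL] by simp
  then show ?thesis using sigma_eq[OF a(1)] xa_eq a by simp
qed

lemma fix_imp_reg: assumes fx: "\<And>r. 1 \<le> r \<Longrightarrow> r \<le> n \<Longrightarrow> AR_perm c (inv_AR_map c r) = r"
  shows "auslander_regular n c"
proof -
  have "\<forall>a < n. \<forall>k \<le> Lc a. pd (ych a k) \<le> k"
  proof (intro allI impI)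
    fix a k assume a: "a < n" and k: "k \<le> Lc a"
    interpret kupa n c a using K a by unfold_locales auto
    have "xch sa (pd sa) + 1 = a + 1" using fx[of "a+1"] sigma_eq[OF a] psi_eq[OF sa_range] a by simp
    then have e: "xch sa (pd sa) = a" by simp
    have "xa La \<le> xch sa (pd sa)" using xch_inc_le[OF sa_range(2) pd_ge] .
    then have "xa La = a" using e xL_ge by simp
    then show "pd (ya k) \<le> k" using lemB2 k by blast
  qed
  then show ?thesis using reg_iff by blast
qed

lemma fix_imp_bij: assumes fx: "\<And>r. 1 \<le> r \<Longrightarrow> r \<le> n \<Longrightarrow> AR_perm c (inv_AR_map c r) = r"
  shows "bij_betw (inv_AR_map c) {1..n} {1..n}"
proof -
  have inj: "inj_on (inv_AR_map c) {1..n}"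
  proof (rule inj_onI)
    fix x y assume "x \<in> {1..n}" "y \<in> {1..n}" "inv_AR_map c x = inv_AR_map c y"
    then have "AR_perm c (inv_AR_map c x) = AR_perm c (inv_AR_map c y)" by simp
    then show "x = y" using fx \<open>x \<in> {1..n}\<close> \<open>y \<in> {1..n}\<close> by simp
  qed
  have sub: "inv_AR_map c ` {1..n} \<subseteq> {1..n}" using sigma_range' by auto
  have "inv_AR_map c ` {1..n} = {1..n}" using endo_inj_surj[OF _ sub inj] by simp
  then show ?thesis using inj unfolding bij_betw_def by simp
qed

lemma bij_imp_fix: assumes bij: "bij_betw (inv_AR_map c) {1..n} {1..n}" and r: "1 \<le> r" "r \<le> n"
  shows "AR_perm c (inv_AR_map c r) = r"
proof -
  have inj: "inj_on (inv_AR_map c) {1..n}" using bij bij_betw_def by blast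
  have injt: "inj_on tau {0..<n}"
  proof (rule inj_onI)
    fix i j assume "i \<in> {0..<n}" "j \<in> {0..<n}" "tau i = tau j"
    then have "inv_AR_map c (i+1) = inv_AR_map c (j+1)" using tau_sigma by simp
    moreover have "i+1 \<in> {1..n}" "j+1 \<in> {1..n}" using \<open>i \<in> {0..<n}\<close> \<open>j \<in> {0..<n}\<close> by auto
    ultimately show "i = j" using inj_onD[OF inj] by fastforce
  qed
  have sp: "\<And>s. 1 \<le> s \<Longrightarrow> s \<le> n \<Longrightarrow> inv_AR_map c (AR_perm c s) = s"
  proof -
    fix s assume s: "1 \<le> s" "s \<le> n"
    have "tau (xch s (pd s)) = s - 1" using b1[OF injt, of "s-1"] s by simp
    moreover have "inv_AR_map c (AR_perm c s) = tau (xch s (pd s)) + 1"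
      using psi_eq[OF s] tau_sigma psi_range[OF s] by simp
    ultimately show "inv_AR_map c (AR_perm c s) = s" using s by simp
  qed
  have s: "1 \<le> inv_AR_map c r" "inv_AR_map c r \<le> n" using sigma_range' r by auto
  have p: "1 \<le> AR_perm c (inv_AR_map c r)" "AR_perm c (inv_AR_map c r) \<le> n" using psi_range' s by auto
  have e: "inv_AR_map c (AR_perm c (inv_AR_map c r)) = inv_AR_map c r" using sp[OF s] .
  have m1: "AR_perm c (inv_AR_map c r) \<in> {1..n}" using p by simp
  have m2: "r \<in> {1..n}" using r by simp
  show ?thesis using inj_onD[OF inj e m1 m2] .
qed

end

lemma inv_det: assumes A: "A \<in> carrier_mat n n" and inv: "invertible_mat A"
  shows "det A \<noteq> (0::real)"
proof -
  obtain B where AB: "A * B = 1\<^sub>m (dim_row A)" and BA: "B * A = 1\<^sub>m (dim_row B)"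
    using inv unfolding invertible_mat_def inverts_mat_def by blast
  have "dim_col B = n" using AB A by (metis dim_col_mat(1) index_mult_mat(3) one_mat_def carrier_matD(1))
  moreover have "dim_row B = n" using BA A by (metis dim_col_mat(1) index_mult_mat(3) one_mat_def carrier_matD(2))
  ultimately have B: "B \<in> carrier_mat n n" by auto
  have "det (A * B) = det A * det B" using det_mult[OF A B] .
  moreover have "A * B = 1\<^sub>m n" using AB A by simp
  ultimately have "det A * det B = 1" by simp
  then show ?thesis by auto
qed

lemma ut_diag: assumes A: "A \<in> carrier_mat n n" and ut: "upper_triangular A" and inv: "invertible_mat A"
  and j: "j < n" shows "A $$ (j,j) \<noteq> (0::real)"
proof -
  have "0 \<notin> set (diag_mat A)" using upper_triangular_imp_det_eq_0_iff[OF A ut] inv_det[OF A inv] by simp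
  then show ?thesis using A j unfolding diag_mat_def by auto
qed

lemma det_ne_invertible: assumes A: "A \<in> carrier_mat n n" and d: "det A \<noteq> (0::real)"
  shows "invertible_mat A"
proof -
  have "A \<in> Units (ring_mat TYPE(real) n ())" using det_non_zero_imp_unit[OF A d] .
  then obtain B where B: "B \<in> carrier_mat n n" "B * A = 1\<^sub>m n" "A * B = 1\<^sub>m n"
    unfolding Units_def ring_mat_def by auto
  then show ?thesis using A unfolding invertible_mat_def inverts_mat_def by auto
qed

lemma perm_mult_entry: assumes p: "p permutes {0..<n}" and B: "B \<in> carrier_mat n n"
  and i: "i < n" and m: "m < n"
  shows "(perm_matrix n p * B) $$ (i,m) = B $$ (inv_into UNIV p i, m)"
proof -
  have P: "perm_matrix n p \<in> carrier_mat n n" unfolding perm_matrix_def by simp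
  have "(perm_matrix n p * B) $$ (i,m) = (\<Sum>k \<in> {0..<n}. perm_matrix n p $$ (i,k) * B $$ (k,m))"
    using mult_entry[OF P B i m] .
  also have "\<dots> = (\<Sum>k \<in> {0..<n}. if k = inv_into UNIV p i then B $$ (k,m) else 0)"
  proof (rule sum.cong[OF refl])
    fix k assume k: "k \<in> {0..<n}"
    have "(i = p k) = (k = inv_into UNIV p i)" using permutes_inverses[OF p] by metis
    then show "perm_matrix n p $$ (i,k) * B $$ (k,m) = (if k = inv_into UNIV p i then B $$ (k,m) else 0)"
      using k i unfolding perm_matrix_def by auto
  qed
  also have "\<dots> = B $$ (inv_into UNIV p i, m)"
    using permutes_in_image[OF permutes_inv[OF p]] i by (simp add: sum.delta)
  finally show ?thesis .
qed

context kup begin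

lemma U1_mult_perm_entry: assumes p: "p permutes {0..<n}" and A: "A \<in> carrier_mat n n"
  and i: "i < n" and b: "b < n"
  shows "(A * perm_matrix n p) $$ (i,b) = A $$ (i, p b)"
proof -
  have P: "perm_matrix n p \<in> carrier_mat n n" unfolding perm_matrix_def by simp
  have pb: "p b < n" using permutes_in_image[OF p] b by simp
  have "(A * perm_matrix n p) $$ (i,b) = (\<Sum>k \<in> {0..<n}. A $$ (i,k) * perm_matrix n p $$ (k,b))"
    using mult_entry[OF A P i b] .
  also have "\<dots> = (\<Sum>k \<in> {0..<n}. if k = p b then A $$ (i,k) else 0)"
  proof (rule sum.cong[OF refl])
    fix k assume "k \<in> {0..<n}"
    then show "A $$ (i,k) * perm_matrix n p $$ (k,b) = (if k = p b then A $$ (i,k) else 0)"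
      using b unfolding perm_matrix_def by auto
  qed
  also have "\<dots> = A $$ (i, p b)" by (subst sum.delta) (use pb in auto)
  finally show ?thesis .
qed

abbreviation "Cox \<equiv> coxeter n c"

lemma Cox_carrier: "Cox \<in> carrier_mat n n" using cox_eq Um_carrier by simp

lemma Cox_entry: "i < n \<Longrightarrow> m < n \<Longrightarrow> Cox $$ (i,m) = - Um $$ (i,m)"
  using cox_eq Um_carrier by simp

definition p0 :: "nat \<Rightarrow> nat" where
  "p0 j = (if j < n then inv_into {0..<n} tau j else j)"

lemma tau_bij_of_sigma: assumes bij: "bij_betw (inv_AR_map c) {1..n} {1..n}"
  shows "bij_betw tau {0..<n} {0..<n}"
proof -
  have inj: "inj_on (inv_AR_map c) {1..n}" using bij bij_betw_def by blast
  have injt: "inj_on tau {0..<n}"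
  proof (rule inj_onI)
    fix i j assume h: "i \<in> {0..<n}" "j \<in> {0..<n}" "tau i = tau j"
    then have "inv_AR_map c (i+1) = inv_AR_map c (j+1)" using tau_sigma by simp
    moreover have "i+1 \<in> {1..n}" "j+1 \<in> {1..n}" using h by auto
    ultimately show "i = j" using inj_onD[OF inj] by fastforce
  qed
  have sub: "tau ` {0..<n} \<subseteq> {0..<n}" using tau_lt by auto
  show ?thesis using endo_inj_surj[OF _ sub injt] injt unfolding bij_betw_def by simp
qed

lemma p0_props: assumes bt: "bij_betw tau {0..<n} {0..<n}"
  shows "p0 permutes {0..<n}" "\<And>j. j < n \<Longrightarrow> tau (p0 j) = j" "\<And>j. j < n \<Longrightarrow> p0 j < n"
    "\<And>i. i < n \<Longrightarrow> p0 (tau i) = i"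
proof -
  have bi: "bij_betw (inv_into {0..<n} tau) {0..<n} {0..<n}" using bij_betw_inv_into[OF bt] .
  have bp: "bij_betw p0 {0..<n} {0..<n}"
    using bi unfolding p0_def by (rule bij_betw_cong[THEN iffD1, rotated]) auto
  show "p0 permutes {0..<n}" by (rule bij_imp_permutes[OF bp]) (auto simp: p0_def)
  show "\<And>j. j < n \<Longrightarrow> tau (p0 j) = j" unfolding p0_def using bt
    by (simp add: bij_betw_def f_inv_into_f)
  show "\<And>j. j < n \<Longrightarrow> p0 j < n" using bp unfolding bij_betw_def by auto
  show "\<And>i. i < n \<Longrightarrow> p0 (tau i) = i" unfolding p0_def using bt tau_lt
    by (simp add: bij_betw_def inv_into_f_f)
qed

definition U20 :: "real mat" where "U20 = mat n n (\<lambda>(j,m). Cox $$ (p0 j, m))"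

lemma U20_props: assumes bt: "bij_betw tau {0..<n} {0..<n}"
  shows "U20 \<in> carrier_mat n n" "upper_triangular U20" "\<And>j. j < n \<Longrightarrow> U20 $$ (j,j) \<noteq> 0"
    "invertible_mat U20" "Cox = perm_matrix n p0 * U20"
proof -
  note pp = p0_props[OF bt]
  show C: "U20 \<in> carrier_mat n n" unfolding U20_def by simp
  show ut: "upper_triangular U20"
  proof (rule upper_triangularI)
    fix i j assume "j < i" "i < dim_row U20"
    then have ij: "i < n" "j < n" "j < tau (p0 i)" using pp(2) unfolding U20_def by auto
    then have "Cox $$ (p0 i, j) = 0" using Cox_entry[OF pp(3)[OF ij(1)] ij(2)] Um_row[OF pp(3)[OF ij(1)] ij(2)] by simp
    then show "U20 $$ (i,j) = 0" unfolding U20_def using ij by simp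
  qed
  show dg: "\<And>j. j < n \<Longrightarrow> U20 $$ (j,j) \<noteq> 0"
  proof -
    fix j assume j: "j < n"
    have "U20 $$ (j,j) = - Um $$ (p0 j, j)" unfolding U20_def using j Cox_entry pp(3) by simp
    also have "\<dots> = - ((-1)^(Lc (p0 j)))" using Um_row[OF pp(3)[OF j] j] pp(2)[OF j] by simp
    finally show "U20 $$ (j,j) \<noteq> 0" by simp
  qed
  have "det U20 = prod_list (diag_mat U20)" using det_upper_triangular[OF ut C] .
  moreover have "0 \<notin> set (diag_mat U20)" using dg C unfolding diag_mat_def by auto
  ultimately have "det U20 \<noteq> 0" using prod_list_zero_iff by metis
  then show "invertible_mat U20" using det_ne_invertible[OF C] by simp
  show "Cox = perm_matrix n p0 * U20"
  proof (rule eq_matI)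
    show "dim_row Cox = dim_row (perm_matrix n p0 * U20)" "dim_col Cox = dim_col (perm_matrix n p0 * U20)"
      using Cox_carrier C unfolding perm_matrix_def by auto
    fix i m assume "i < dim_row (perm_matrix n p0 * U20)" "m < dim_col (perm_matrix n p0 * U20)"
    then have im: "i < n" "m < n" using C unfolding perm_matrix_def by auto
    have "inv_into UNIV p0 i = tau i"
      using permutes_inverses(2)[OF pp(1)] pp(4)[OF im(1)] by metis
    then have "(perm_matrix n p0 * U20) $$ (i,m) = U20 $$ (tau i, m)"
      using perm_mult_entry[OF pp(1) C im] by simp
    also have "\<dots> = Cox $$ (i,m)" unfolding U20_def using im tau_lt pp(4) by simp
    finally show "Cox $$ (i,m) = (perm_matrix n p0 * U20) $$ (i,m)" by simp
  qed
qed

end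

context kup begin

lemma perm_matrix_carrier: "perm_matrix n p \<in> carrier_mat n n" unfolding perm_matrix_def by simp

lemma one_perm: "1\<^sub>m n * perm_matrix n p = perm_matrix n p" unfolding perm_matrix_def by simp

lemma bruhat1_imp_bij: assumes br: "bruhat_decomp n Cox (1\<^sub>m n) p U2"
  shows "bij_betw (inv_AR_map c) {1..n} {1..n}"
proof -
  have U2: "U2 \<in> carrier_mat n n" "upper_triangular U2" "invertible_mat U2" and p: "p permutes {0..<n}"
    and eq: "Cox = 1\<^sub>m n * perm_matrix n p * U2" using br unfolding bruhat_decomp_def by auto
  have eq2: "Cox = perm_matrix n p * U2" using eq one_perm by simp
  have row: "\<And>j m. j < n \<Longrightarrow> m < n \<Longrightarrow> Um $$ (p j, m) = - U2 $$ (j, m)"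
  proof -
    fix j m assume j: "j < n" and m: "m < n"
    have pj: "p j < n" using permutes_in_image[OF p] j by simp
    have "Cox $$ (p j, m) = U2 $$ (inv_into UNIV p (p j), m)" using eq2 perm_mult_entry[OF p U2(1) pj m] by simp
    also have "\<dots> = U2 $$ (j, m)" using permutes_inverses(2)[OF p] by simp
    finally show "Um $$ (p j, m) = - U2 $$ (j, m)" using Cox_entry[OF pj m] by simp
  qed
  have tp: "\<And>j. j < n \<Longrightarrow> tau (p j) = j"
  proof -
    fix j assume j: "j < n"
    have pj: "p j < n" using permutes_in_image[OF p] j by simp
    have t: "tau (p j) < n" using tau_lt[OF pj] .
    show "tau (p j) = j"
    proof (rule ccontr)
      assume ne: "tau (p j) \<noteq> j"
      show False
      proof (cases "tau (p j) < j")
        case True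
        have "Um $$ (p j, tau (p j)) = (-1)^(Lc (p j))" using Um_row[OF pj t] by simp
        moreover have "U2 $$ (j, tau (p j)) = 0" using U2(2) True j U2(1) by auto
        ultimately show False using row[OF j t] by simp
      next
        case False
        then have "j < tau (p j)" using ne by simp
        then have "Um $$ (p j, j) = 0" using Um_row[OF pj j] by simp
        moreover have "U2 $$ (j, j) \<noteq> 0" using ut_diag[OF U2(1) U2(2) U2(3) j] .
        ultimately show False using row[OF j j] by simp
      qed
    qed
  qed
  have "{0..<n} \<subseteq> tau ` {0..<n}"
  proof
    fix j assume "j \<in> {0..<n}"
    then have "tau (p j) = j" "p j \<in> {0..<n}" using tp permutes_in_image[OF p] by auto
    then show "j \<in> tau ` {0..<n}" by force
  qed
  then have injt: "inj_on tau {0..<n}" using finite_surj_inj by blast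
  have inj: "inj_on (inv_AR_map c) {1..n}"
  proof (rule inj_onI)
    fix x y assume h: "x \<in> {1..n}" "y \<in> {1..n}" "inv_AR_map c x = inv_AR_map c y"
    then have "x - 1 < n" "y - 1 < n" by auto
    then have "tau (x-1) = tau (y-1)" using h(3) tau_sigma[of "x-1"] tau_sigma[of "y-1"] h(1,2) by auto
    then have "x - 1 = y - 1" using injt \<open>x - 1 < n\<close> \<open>y - 1 < n\<close> unfolding inj_on_def by auto
    then show "x = y" using h(1,2) by auto
  qed
  have sub: "inv_AR_map c ` {1..n} \<subseteq> {1..n}" using sigma_range' by auto
  have "inv_AR_map c ` {1..n} = {1..n}" using endo_inj_surj[OF _ sub inj] by simp
  then show ?thesis using inj unfolding bij_betw_def by simp
qed

lemma bij_imp_bruhat1: assumes bij: "bij_betw (inv_AR_map c) {1..n} {1..n}"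
  shows "\<exists>p U2. bruhat_decomp n Cox (1\<^sub>m n) p U2"
proof -
  have bt: "bij_betw tau {0..<n} {0..<n}" using tau_bij_of_sigma[OF bij] .
  note U = U20_props[OF bt] and pp = p0_props[OF bt]
  have i1: "invertible_mat (1\<^sub>m n :: real mat)"
    unfolding invertible_mat_def inverts_mat_def by (intro conjI exI[of _ "1\<^sub>m n"]) auto
  have "bruhat_decomp n Cox (1\<^sub>m n) p0 U20"
    unfolding bruhat_decomp_def using U pp(1) i1 one_perm by auto
  then show ?thesis by blast
qed

lemma bruhat_unique: assumes bij: "bij_betw (inv_AR_map c) {1..n} {1..n}"
  and br: "bruhat_decomp n Cox U1 p U2" and a: "a < n"
  shows "p a = p0 a"
proof -
  have bt: "bij_betw tau {0..<n} {0..<n}" using tau_bij_of_sigma[OF bij] .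
  note U = U20_props[OF bt] and pp = p0_props[OF bt]
  have U1: "U1 \<in> carrier_mat n n" "upper_triangular U1"
    and U2: "U2 \<in> carrier_mat n n" "upper_triangular U2" "invertible_mat U2" and p: "p permutes {0..<n}"
    and eq: "Cox = U1 * perm_matrix n p * U2" using br unfolding bruhat_decomp_def by auto
  define W where "W = (\<lambda>a b. U1 $$ (p0 a, p b))"
  have weq: "\<And>a m. a < n \<Longrightarrow> m < n \<Longrightarrow> (\<Sum>b \<in> {0..<n}. W a b * U2 $$ (b,m)) = U20 $$ (a,m)"
  proof -
    fix a m assume a: "a < n" and m: "m < n"
    have pa: "p0 a < n" using pp(3)[OF a] .
    have UP: "U1 * perm_matrix n p \<in> carrier_mat n n" using U1 perm_matrix_carrier by simp
    have "Cox $$ (p0 a, m) = ((U1 * perm_matrix n p) * U2) $$ (p0 a, m)" using eq by simp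
    also have "\<dots> = (\<Sum>b \<in> {0..<n}. (U1 * perm_matrix n p) $$ (p0 a, b) * U2 $$ (b,m))"
      using mult_entry[OF UP U2(1) pa m] .
    also have "\<dots> = (\<Sum>b \<in> {0..<n}. W a b * U2 $$ (b,m))"
      unfolding W_def using U1_mult_perm_entry[OF p U1(1) pa] by simp
    finally show "(\<Sum>b \<in> {0..<n}. W a b * U2 $$ (b,m)) = U20 $$ (a,m)"
      unfolding U20_def using a m by simp
  qed
  have single: "\<And>b. b < n \<Longrightarrow> (\<forall>b' < b. W a b' = 0) \<Longrightarrow>
      (\<Sum>b' \<in> {0..<n}. W a b' * U2 $$ (b',b)) = W a b * U2 $$ (b,b)"
  proof -
    fix b assume b: "b < n" and z: "\<forall>b' < b. W a b' = 0"
    have "(\<Sum>b' \<in> {0..<n}. W a b' * U2 $$ (b',b)) = (\<Sum>b' \<in> {0..<n}. if b' = b then W a b * U2 $$ (b,b) else 0)"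
    proof (rule sum.cong[OF refl])
      fix b' assume b': "b' \<in> {0..<n}"
      show "W a b' * U2 $$ (b',b) = (if b' = b then W a b * U2 $$ (b,b) else 0)"
      proof (cases "b' < b")
        case True then show ?thesis using z by simp
      next
        case False
        show ?thesis
        proof (cases "b' = b")
          case True then show ?thesis by simp
        next
          case False
          then have "b < b'" using \<open>\<not> b' < b\<close> by simp
          then have "U2 $$ (b',b) = 0" using U2(1,2) b' by auto
          then show ?thesis using False by simp
        qed
      qed
    qed
    also have "\<dots> = W a b * U2 $$ (b,b)" using b by (simp add: sum.delta')
    finally show "(\<Sum>b' \<in> {0..<n}. W a b' * U2 $$ (b',b)) = W a b * U2 $$ (b,b)" .
  qed
  have Z: "\<And>b. b < a \<Longrightarrow> W a b = 0"
  proof -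
    fix b show "b < a \<Longrightarrow> W a b = 0"
    proof (induction b rule: less_induct)
      case (less b)
      have bn: "b < n" using less.prems a by simp
      have "W a b * U2 $$ (b,b) = U20 $$ (a,b)" using single[OF bn] less weq[OF a bn] by simp
      also have "\<dots> = 0" using U(1,2) less.prems a by auto
      finally show "W a b = 0" using ut_diag[OF U2(1) U2(2) U2(3) bn] by simp
    qed
  qed
  have "W a a * U2 $$ (a,a) = U20 $$ (a,a)" using single[OF a] Z weq[OF a a] by simp
  then have "W a a \<noteq> 0" using U(3)[OF a] by auto
  then have le: "p0 a \<le> p a"
    using U1 pp(3)[OF a] permutes_in_image[OF p] a unfolding W_def by (metis not_le upper_triangularD carrier_matD(1))
  have leall: "\<forall>a' \<in> {0..<n}. p0 a' \<le> p a'"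
  proof
    fix a' assume a': "a' \<in> {0..<n}"
    have "W a' a' \<noteq> 0"
    proof -
      have Z': "\<And>b. b < a' \<Longrightarrow> W a' b = 0"
      proof -
        fix b show "b < a' \<Longrightarrow> W a' b = 0"
        proof (induction b rule: less_induct)
          case (less b)
          have bn: "b < n" using less.prems a' by simp
          have sg: "(\<Sum>b' \<in> {0..<n}. W a' b' * U2 $$ (b',b)) = W a' b * U2 $$ (b,b)"
          proof -
            have "(\<Sum>b' \<in> {0..<n}. W a' b' * U2 $$ (b',b)) = (\<Sum>b' \<in> {0..<n}. if b' = b then W a' b * U2 $$ (b,b) else 0)"
            proof (rule sum.cong[OF refl])
              fix b' assume b': "b' \<in> {0..<n}"
              show "W a' b' * U2 $$ (b',b) = (if b' = b then W a' b * U2 $$ (b,b) else 0)"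
              proof (cases "b' < b")
                case True then show ?thesis using less by simp
              next
                case False
                show ?thesis
                proof (cases "b' = b")
                  case True then show ?thesis by simp
                next
                  case False
                  then have "b < b'" using \<open>\<not> b' < b\<close> by simp
                  then have "U2 $$ (b',b) = 0" using U2(1,2) b' by auto
                  then show ?thesis using False by simp
                qed
              qed
            qed
            also have "\<dots> = W a' b * U2 $$ (b,b)" using bn by (simp add: sum.delta')
            finally show ?thesis .
          qed
          have "W a' b * U2 $$ (b,b) = U20 $$ (a',b)" using sg weq a' bn by simp
          also have "\<dots> = 0" using U(1,2) less.prems a' by auto
          finally show "W a' b = 0" using ut_diag[OF U2(1) U2(2) U2(3) bn] by simp
        qed
      qed
      have an: "a' < n" using a' by simp
      have sg: "(\<Sum>b' \<in> {0..<n}. W a' b' * U2 $$ (b',a')) = W a' a' * U2 $$ (a',a')"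
      proof -
        have "(\<Sum>b' \<in> {0..<n}. W a' b' * U2 $$ (b',a')) = (\<Sum>b' \<in> {0..<n}. if b' = a' then W a' a' * U2 $$ (a',a') else 0)"
        proof (rule sum.cong[OF refl])
          fix b' assume b': "b' \<in> {0..<n}"
          show "W a' b' * U2 $$ (b',a') = (if b' = a' then W a' a' * U2 $$ (a',a') else 0)"
          proof (cases "b' < a'")
            case True then show ?thesis using Z' by simp
          next
            case False
            show ?thesis
            proof (cases "b' = a'")
              case True then show ?thesis by simp
            next
              case False
              then have "a' < b'" using \<open>\<not> b' < a'\<close> by simp
              then have "U2 $$ (b',a') = 0" using U2(1,2) b' by auto
              then show ?thesis using False by simp
            qed
          qed
        qed
        also have "\<dots> = W a' a' * U2 $$ (a',a')" using an by (simp add: sum.delta')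
        finally show ?thesis .
      qed
      have "W a' a' * U2 $$ (a',a') = U20 $$ (a',a')" using sg weq[OF an an] by simp
      then show "W a' a' \<noteq> 0" using U(3)[OF an] by auto
    qed
    then show "p0 a' \<le> p a'"
      using U1 pp(3) permutes_in_image[OF p] a' unfolding W_def
      by (metis atLeastLessThan_iff not_le upper_triangularD carrier_matD(1))
  qed
  show "p a = p0 a"
  proof (rule ccontr)
    assume "p a \<noteq> p0 a"
    then have "p0 a < p a" using le by simp
    then have ex: "\<exists>a' \<in> {0..<n}. p0 a' < p a'" using a by auto
    have "(\<Sum>a' \<in> {0..<n}. p0 a') < (\<Sum>a' \<in> {0..<n}. p a')"
      using sum_strict_mono_ex1[of "{0..<n}" p0 p] leall ex by blast
    moreover have "(\<Sum>a' \<in> {0..<n}. p0 a') = (\<Sum>a' \<in> {0..<n}. a')"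
      using sum.permute[OF pp(1), of id] by simp
    moreover have "(\<Sum>a' \<in> {0..<n}. p a') = (\<Sum>a' \<in> {0..<n}. a')"
      using sum.permute[OF p, of id] by simp
    ultimately show False by simp
  qed
qed

end

theorem theorem4p9:
  fixes n :: nat and c :: "nat \<Rightarrow> nat"
  assumes "kupisch n c"
  shows "(auslander_regular n c \<longleftrightarrow> bij_betw (inv_AR_map c) {1..n} {1..n})
       \<and> (bij_betw (inv_AR_map c) {1..n} {1..n} \<longleftrightarrow>
            (\<exists>p U2. bruhat_decomp n (coxeter n c) (1\<^sub>m n) p U2))
       \<and> (auslander_regular n c \<longrightarrow>
            (\<forall>U1 p U2. bruhat_decomp n (coxeter n c) U1 p U2 \<longrightarrow>
               (\<forall>i < n. p i + 1 = AR_perm c (i + 1))))"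
proof -
  interpret kup n c using assms by unfold_locales
  have A: "auslander_regular n c \<longleftrightarrow> bij_betw (inv_AR_map c) {1..n} {1..n}"
  proof
    assume "auslander_regular n c"
    then show "bij_betw (inv_AR_map c) {1..n} {1..n}" using fix_imp_bij reg_imp_fix by blast
  next
    assume "bij_betw (inv_AR_map c) {1..n} {1..n}"
    then show "auslander_regular n c" using fix_imp_reg bij_imp_fix by blast
  qed
  have B: "bij_betw (inv_AR_map c) {1..n} {1..n} \<longleftrightarrow> (\<exists>p U2. bruhat_decomp n (coxeter n c) (1\<^sub>m n) p U2)"
    using bij_imp_bruhat1 bruhat1_imp_bij by blast
  have C: "auslander_regular n c \<longrightarrow>
            (\<forall>U1 p U2. bruhat_decomp n (coxeter n c) U1 p U2 \<longrightarrow> (\<forall>i < n. p i + 1 = AR_perm c (i + 1)))"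
  proof (intro impI allI)
    fix U1 p U2 i
    assume reg: "auslander_regular n c" and br: "bruhat_decomp n (coxeter n c) U1 p U2" and i: "i < n"
    have bij: "bij_betw (inv_AR_map c) {1..n} {1..n}" using A reg by simp
    have bt: "bij_betw tau {0..<n} {0..<n}" using tau_bij_of_sigma[OF bij] .
    note pp = p0_props[OF bt]
    have "p i = p0 i" using bruhat_unique[OF bij br i] .
    moreover have "inv_AR_map c (p0 i + 1) = i + 1" using tau_sigma[OF pp(3)[OF i]] pp(2)[OF i] by simp
    moreover have "AR_perm c (inv_AR_map c (p0 i + 1)) = p0 i + 1"
      using reg_imp_fix[OF reg] pp(3)[OF i] by simp
    ultimately show "p i + 1 = AR_perm c (i + 1)" by simp
  qed
  show ?thesis using A B C by blast
qed


end
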